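(* Let $\mathcal M$ be a sufficiently saturated geometric structure with universe $M$. Let $\mathbf x=(x_1,\dots,x_n)$ and $y$ be variables, and let $\chi(\mathbf x,y)$ be a formula of the form $\bigwedge_{i=1}^r C_i(\mathbf x^i,y)$, where each $\mathbf x^i$ is a subtuple of $\mathbf x$ and each $C_i(\mathbf x^i,y)$ is a formula defining an $\mathrm{acl}(\emptyset)$-definable $(|\mathbf x^i|+1)$-curve. Let $\mathbf x'$ be the subtuple of $\mathbf x$ consisting of all variables occurring in some $\mathbf x^i$. Then $\chi(\mathbf x,y)$ is equivalent in $\mathcal M$ to a disjunction $$E(\mathbf x',y)\vee\bigvee_{l=1}^L\bigl(y=q_l\wedge\phi_l(\mathbf x')\bigr),$$ where $E(\mathbf x',y)$ is a formula defining an $\mathrm{acl}(\emptyset)$-definable $(|\mathbf x'|+1)$-curve, $q_1,\dots,q_L\in\mathrm{acl}(\emptyset)$, each $\phi_l(\mathbf x')$ defines a boolean combination of $\mathrm{acl}(\emptyset)$-definable curve-based cylinders, and $\mathcal M\models E(\mathbf x',y)\rightarrow\bigwedge_{l=1}^L y\neq q_l$.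
   Context: A structure $\mathcal M$ is a geometric structure if every model of its theory satisfies: (1) Exchange: $a\in\mathrm{acl}(bC)\setminus\mathrm{acl}(C)\Rightarrow b\in\mathrm{acl}(aC)$; (2) Uniform finiteness: for each formula $\psi(y,\mathbf w)$ there is $k$ such that for every tuple $\mathbf a$ the set $\{b:\psi(b,\mathbf a)\}$ is infinite or has size $\le k$. Dimension of a definable set $X\subseteq M^n$ (defined by $\Phi$ over parameters $B$): the largest $d$ such that in a saturated extension some tuple satisfying $\Phi$ has a subtuple $(a_{i_1},\dots,a_{i_d})$ with $a_{i_{j+1}}\notin\mathrm{acl}(\{a_{i_1},\dots,a_{i_j}\}\cup B)$. An $A$-definable $n$-curve is a subset of $M^n$ of dimension $\le 1$ definable with parameters from $A$. A set $\tilde C\subseteq M^m$ is an $A$-definable cylinder based on an $n$-curve if there are indices $1\le i_1<\dots<i_n\le m$ and an $A$-definable $n$-curve $C$ with $\tilde C=\{(x_1,\dots,x_m)\in M^m:(x_{i_1},\dots,x_{i_n})\in C\}$; an $A$-definable curve-based cylinder is such a cylinder for some $n$. "$\mathrm{acl}(\emptyset)$-definable" means definable with parameters from $\mathrm{acl}(\emptyset)$. *)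

theory Defs
  imports Main
begin

text \<open>A structure with universe UNIV :: 'a set is given by an interpretation
  I :: 'r => 'a list => bool of the relation symbols 'r.  Formulas may contain
  parameters (elements of the universe) as terms; a formula over A is one whose
  parameters lie in A.\<close>

datatype 'a tm = Var nat | Par 'a

datatype ('r, 'a) fm =
    FEq "'a tm" "'a tm"
  | FRel 'r "'a tm list"
  | FNeg "('r, 'a) fm"
  | FAnd "('r, 'a) fm" "('r, 'a) fm"
  | FEx nat "('r, 'a) fm"

primrec tval :: "(nat \<Rightarrow> 'a) \<Rightarrow> 'a tm \<Rightarrow> 'a" where
  "tval v (Var i) = v i"
| "tval v (Par a) = a"

primrec tvars :: "'a tm \<Rightarrow> nat set" where
  "tvars (Var i) = {i}"
| "tvars (Par a) = {}"

primrec tpars :: "'a tm \<Rightarrow> 'a set" where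
  "tpars (Var i) = {}"
| "tpars (Par a) = {a}"

primrec sat :: "('r \<Rightarrow> 'a list \<Rightarrow> bool) \<Rightarrow> (nat \<Rightarrow> 'a) \<Rightarrow> ('r, 'a) fm \<Rightarrow> bool" where
  "sat I v (FEq s t) = (tval v s = tval v t)"
| "sat I v (FRel R ts) = I R (map (tval v) ts)"
| "sat I v (FNeg \<phi>) = (\<not> sat I v \<phi>)"
| "sat I v (FAnd \<phi> \<psi>) = (sat I v \<phi> \<and> sat I v \<psi>)"
| "sat I v (FEx i \<phi>) = (\<exists>a. sat I (v(i := a)) \<phi>)"

primrec fv :: "('r, 'a) fm \<Rightarrow> nat set" where
  "fv (FEq s t) = tvars s \<union> tvars t"
| "fv (FRel R ts) = (\<Union>t\<in>set ts. tvars t)"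
| "fv (FNeg \<phi>) = fv \<phi>"
| "fv (FAnd \<phi> \<psi>) = fv \<phi> \<union> fv \<psi>"
| "fv (FEx i \<phi>) = fv \<phi> - {i}"

primrec params :: "('r, 'a) fm \<Rightarrow> 'a set" where
  "params (FEq s t) = tpars s \<union> tpars t"
| "params (FRel R ts) = (\<Union>t\<in>set ts. tpars t)"
| "params (FNeg \<phi>) = params \<phi>"
| "params (FAnd \<phi> \<psi>) = params \<phi> \<union> params \<psi>"
| "params (FEx i \<phi>) = params \<phi>"

text \<open>M^n is represented by the lists of length n.  The set defined by a formula
  with free variables among 0..n-1 (variable i read as the i-th coordinate).\<close>

definition defset :: "('r \<Rightarrow> 'a list \<Rightarrow> bool) \<Rightarrow> nat \<Rightarrow> ('r, 'a) fm \<Rightarrow> 'a list set" where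
  "defset I n \<phi> = {xs. length xs = n \<and> sat I (\<lambda>i. xs ! i) \<phi>}"

definition definable :: "('r \<Rightarrow> 'a list \<Rightarrow> bool) \<Rightarrow> 'a set \<Rightarrow> nat \<Rightarrow> 'a list set \<Rightarrow> bool" where
  "definable I A n X \<longleftrightarrow>
     (\<exists>\<phi>. params \<phi> \<subseteq> A \<and> fv \<phi> \<subseteq> {..<n} \<and> X = defset I n \<phi>)"

definition acl :: "('r \<Rightarrow> 'a list \<Rightarrow> bool) \<Rightarrow> 'a set \<Rightarrow> 'a set" where
  "acl I A = {b. \<exists>\<phi>. params \<phi> \<subseteq> A \<and> fv \<phi> \<subseteq> {0}
                     \<and> finite {c. sat I (\<lambda>_. c) \<phi>} \<and> sat I (\<lambda>_. b) \<phi>}"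

definition dim_ge :: "('r \<Rightarrow> 'a list \<Rightarrow> bool) \<Rightarrow> 'a set \<Rightarrow> 'a list set \<Rightarrow> nat \<Rightarrow> bool" where
  "dim_ge I B X d \<longleftrightarrow>
     (\<exists>xs\<in>X. \<exists>is. length is = d \<and> sorted_wrt (<) is \<and> (\<forall>i\<in>set is. i < length xs)
        \<and> (\<forall>j<d. xs ! (is ! j) \<notin> acl I ((\<lambda>k. xs ! (is ! k)) ` {..<j} \<union> B)))"

definition curve :: "('r \<Rightarrow> 'a list \<Rightarrow> bool) \<Rightarrow> 'a set \<Rightarrow> nat \<Rightarrow> 'a list set \<Rightarrow> bool" where
  "curve I A n X \<longleftrightarrow>
     (\<exists>\<phi>. params \<phi> \<subseteq> A \<and> fv \<phi> \<subseteq> {..<n} \<and> X = defset I n \<phi>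
          \<and> \<not> dim_ge I (params \<phi>) X 2)"

definition proj :: "nat set \<Rightarrow> 'a list \<Rightarrow> 'a list" where
  "proj S xs = map (\<lambda>j. xs ! j) (sorted_list_of_set S)"

definition cylinders :: "('r \<Rightarrow> 'a list \<Rightarrow> bool) \<Rightarrow> 'a set \<Rightarrow> nat \<Rightarrow> 'a list set set" where
  "cylinders I A m =
     {Y. \<exists>S C. S \<subseteq> {..<m} \<and> curve I A (card S) C
            \<and> Y = {xs. length xs = m \<and> proj S xs \<in> C}}"

inductive_set boolcomb :: "'a list set set \<Rightarrow> nat \<Rightarrow> 'a list set set"
  for G :: "'a list set set" and m :: nat where
  bc_basic: "Y \<in> G \<Longrightarrow> Y \<in> boolcomb G m"
| bc_univ: "{xs. length xs = m} \<in> boolcomb G m"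
| bc_compl: "Y \<in> boolcomb G m \<Longrightarrow> {xs. length xs = m} - Y \<in> boolcomb G m"
| bc_inter: "Y \<in> boolcomb G m \<Longrightarrow> Z \<in> boolcomb G m \<Longrightarrow> Y \<inter> Z \<in> boolcomb G m"

definition exchange :: "('r \<Rightarrow> 'a list \<Rightarrow> bool) \<Rightarrow> bool" where
  "exchange I \<longleftrightarrow>
     (\<forall>a b C. a \<in> acl I (insert b C) - acl I C \<longrightarrow> b \<in> acl I (insert a C))"

definition uniformly_finite :: "('r \<Rightarrow> 'a list \<Rightarrow> bool) \<Rightarrow> bool" where
  "uniformly_finite I \<longleftrightarrow>
     (\<forall>\<psi> :: ('r, 'a) fm. params \<psi> = {} \<longrightarrow>
        (\<exists>k::nat. \<forall>v. infinite {b. sat I (v(0 := b)) \<psi>} \<or> card {b. sat I (v(0 := b)) \<psi>} \<le> k))"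

definition geometric :: "('r \<Rightarrow> 'a list \<Rightarrow> bool) \<Rightarrow> bool" where
  "geometric I \<longleftrightarrow> exchange I \<and> uniformly_finite I"

text \<open>Saturation (the structure is saturated in its own cardinality): every set of
  formulas in the free variable 0 over a parameter set A of cardinality smaller
  than that of the universe which is finitely satisfiable is satisfiable.\<close>

definition saturated :: "('r \<Rightarrow> 'a list \<Rightarrow> bool) \<Rightarrow> bool" where
  "saturated I \<longleftrightarrow>
     (\<forall>(A :: 'a set) (\<Sigma> :: ('r, 'a) fm set).
        (card_of A, card_of (UNIV :: 'a set)) \<in> ordLess
        \<and> (\<forall>\<phi>\<in>\<Sigma>. fv \<phi> \<subseteq> {0} \<and> params \<phi> \<subseteq> A)
        \<and> (\<forall>\<Sigma>0\<subseteq>\<Sigma>. finite \<Sigma>0 \<longrightarrow> (\<exists>b. \<forall>\<phi>\<in>\<Sigma>0. sat I (\<lambda>_. b) \<phi>))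
        \<longrightarrow> (\<exists>b. \<forall>\<phi>\<in>\<Sigma>. sat I (\<lambda>_. b) \<phi>))"

end

theory Submission
  imports Defs
begin
lemma finite_tvars[simp]: "finite (tvars t)" by (cases t) auto
lemma finite_tpars[simp]: "finite (tpars t)" by (cases t) auto
lemma finite_fv[simp]: "finite (fv \<phi>)" by (induction \<phi>) auto
lemma finite_params[simp]: "finite (params \<phi>)" by (induction \<phi>) auto

lemma tval_agree: "(\<forall>i\<in>tvars t. v i = w i) \<Longrightarrow> tval v t = tval w t"
  by (cases t) auto

lemma sat_agree: "(\<forall>i\<in>fv \<phi>. v i = w i) \<Longrightarrow> sat I v \<phi> = sat I w \<phi>"
proof (induction \<phi> arbitrary: v w)
  case (FEq s t) then show ?case using tval_agree[of s v w] tval_agree[of t v w] by auto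
next
  case (FRel R ts)
  have "map (tval v) ts = map (tval w) ts"
    by (rule map_cong[OF refl], rule tval_agree) (use FRel.prems in auto)
  then show ?case by (simp only: sat.simps)
next
  case (FEx i \<phi>)
  have "\<And>a. sat I (v(i:=a)) \<phi> = sat I (w(i:=a)) \<phi>" using FEx.IH FEx.prems by auto
  then show ?case by simp
next
  case (FAnd a b)
  have "sat I v a = sat I w a" "sat I v b = sat I w b" using FAnd by auto
  then show ?case by simp
qed auto

fun tsub :: "(nat \<Rightarrow> 'a tm) \<Rightarrow> ('a \<Rightarrow> 'a tm) \<Rightarrow> 'a tm \<Rightarrow> 'a tm" where
  "tsub \<sigma> \<tau> (Var i) = \<sigma> i"
| "tsub \<sigma> \<tau> (Par a) = \<tau> a"

lemma subst_ex:
  "\<exists>\<psi>. fv \<psi> \<subseteq> (\<Union>i\<in>fv \<phi>. tvars (\<sigma> i)) \<union> (\<Union>a\<in>params \<phi>. tvars (\<tau> a))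
     \<and> params \<psi> \<subseteq> (\<Union>i\<in>fv \<phi>. tpars (\<sigma> i)) \<union> (\<Union>a\<in>params \<phi>. tpars (\<tau> a))
     \<and> (\<forall>v. (\<forall>a\<in>params \<phi>. tval v (\<tau> a) = a) \<longrightarrow> (sat I v \<psi> = sat I (\<lambda>i. tval v (\<sigma> i)) \<phi>))"
proof (induction \<phi> arbitrary: \<sigma>)
  case (FEq s t)
  show ?case
    by (rule exI[of _ "FEq (tsub \<sigma> \<tau> s) (tsub \<sigma> \<tau> t)"]) (cases s; cases t; auto)
next
  case (FRel R ts)
  have mm: "\<forall>v. (\<forall>a\<in>params (FRel R ts). tval v (\<tau> a) = a) \<longrightarrow>
      map (tval v) (map (tsub \<sigma> \<tau>) ts) = map (tval (\<lambda>i. tval v (\<sigma> i))) ts"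
  proof (intro allI impI)
    fix v assume h: "\<forall>a\<in>params (FRel R ts). tval v (\<tau> a) = a"
    show "map (tval v) (map (tsub \<sigma> \<tau>) ts) = map (tval (\<lambda>i. tval v (\<sigma> i))) ts"
      unfolding map_map
    proof (rule map_cong[OF refl])
      fix u assume hu: "u \<in> set ts"
      have "\<forall>a\<in>tpars u. tval v (\<tau> a) = a" using h hu by (simp only: params.simps) blast
      then show "(tval v \<circ> tsub \<sigma> \<tau>) u = tval (\<lambda>i. tval v (\<sigma> i)) u"
        by (cases u) auto
    qed
  qed
  have "fv (FRel R (map (tsub \<sigma> \<tau>) ts)) \<subseteq> (\<Union>i\<in>fv (FRel R ts). tvars (\<sigma> i)) \<union> (\<Union>a\<in>params (FRel R ts). tvars (\<tau> a))"
    apply auto subgoal for i t by (cases t) force+ done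
  moreover have "params (FRel R (map (tsub \<sigma> \<tau>) ts)) \<subseteq> (\<Union>i\<in>fv (FRel R ts). tpars (\<sigma> i)) \<union> (\<Union>a\<in>params (FRel R ts). tpars (\<tau> a))"
    apply auto subgoal for i t by (cases t) force+ done
  moreover have "\<forall>v. (\<forall>a\<in>params (FRel R ts). tval v (\<tau> a) = a) \<longrightarrow>
      sat I v (FRel R (map (tsub \<sigma> \<tau>) ts)) = sat I (\<lambda>i. tval v (\<sigma> i)) (FRel R ts)"
  proof (intro allI impI)
    fix v assume hv: "\<forall>a\<in>params (FRel R ts). tval v (\<tau> a) = a"
    show "sat I v (FRel R (map (tsub \<sigma> \<tau>) ts)) = sat I (\<lambda>i. tval v (\<sigma> i)) (FRel R ts)"
      by (simp only: sat.simps mp[OF spec[OF mm] hv])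
  qed
  ultimately show ?case by (intro exI[of _ "FRel R (map (tsub \<sigma> \<tau>) ts)"] conjI) assumption+
next
  case (FNeg \<phi>)
  obtain \<psi> where "fv \<psi> \<subseteq> (\<Union>i\<in>fv \<phi>. tvars (\<sigma> i)) \<union> (\<Union>a\<in>params \<phi>. tvars (\<tau> a))
     \<and> params \<psi> \<subseteq> (\<Union>i\<in>fv \<phi>. tpars (\<sigma> i)) \<union> (\<Union>a\<in>params \<phi>. tpars (\<tau> a))
     \<and> (\<forall>v. (\<forall>a\<in>params \<phi>. tval v (\<tau> a) = a) \<longrightarrow> (sat I v \<psi> = sat I (\<lambda>i. tval v (\<sigma> i)) \<phi>))" using FNeg.IH[of \<sigma>] by (elim exE) 
  then show ?case by (intro exI[of _ "FNeg \<psi>"]) simp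
next
  case (FAnd \<phi>1 \<phi>2)
  obtain \<psi>1 where 1: "fv \<psi>1 \<subseteq> (\<Union>i\<in>fv \<phi>1. tvars (\<sigma> i)) \<union> (\<Union>a\<in>params \<phi>1. tvars (\<tau> a))
     \<and> params \<psi>1 \<subseteq> (\<Union>i\<in>fv \<phi>1. tpars (\<sigma> i)) \<union> (\<Union>a\<in>params \<phi>1. tpars (\<tau> a))
     \<and> (\<forall>v. (\<forall>a\<in>params \<phi>1. tval v (\<tau> a) = a) \<longrightarrow> (sat I v \<psi>1 = sat I (\<lambda>i. tval v (\<sigma> i)) \<phi>1))"
    using FAnd.IH(1)[of \<sigma>] by (elim exE)
  obtain \<psi>2 where 2: "fv \<psi>2 \<subseteq> (\<Union>i\<in>fv \<phi>2. tvars (\<sigma> i)) \<union> (\<Union>a\<in>params \<phi>2. tvars (\<tau> a))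
     \<and> params \<psi>2 \<subseteq> (\<Union>i\<in>fv \<phi>2. tpars (\<sigma> i)) \<union> (\<Union>a\<in>params \<phi>2. tpars (\<tau> a))
     \<and> (\<forall>v. (\<forall>a\<in>params \<phi>2. tval v (\<tau> a) = a) \<longrightarrow> (sat I v \<psi>2 = sat I (\<lambda>i. tval v (\<sigma> i)) \<phi>2))"
    using FAnd.IH(2)[of \<sigma>] by (elim exE)
  show ?case
  proof (intro exI[of _ "FAnd \<psi>1 \<psi>2"] conjI allI impI)
    fix v assume "\<forall>a\<in>params (FAnd \<phi>1 \<phi>2). tval v (\<tau> a) = a"
    then show "sat I v (FAnd \<psi>1 \<psi>2) = sat I (\<lambda>i. tval v (\<sigma> i)) (FAnd \<phi>1 \<phi>2)"
      using 1 2 by simp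
  qed (use 1 2 in auto)
next
  case (FEx i \<phi>)
  let ?X = "(\<Union>j\<in>fv \<phi>. tvars (\<sigma> j)) \<union> (\<Union>a\<in>params \<phi>. tvars (\<tau> a))"
  have "finite ?X" by auto
  then obtain z where z: "z \<notin> ?X" using ex_new_if_finite[OF infinite_UNIV_nat] by blast
  obtain \<psi> where \<psi>: "fv \<psi> \<subseteq> (\<Union>j\<in>fv \<phi>. tvars ((\<sigma>(i:=Var z)) j)) \<union> (\<Union>a\<in>params \<phi>. tvars (\<tau> a))
     \<and> params \<psi> \<subseteq> (\<Union>j\<in>fv \<phi>. tpars ((\<sigma>(i:=Var z)) j)) \<union> (\<Union>a\<in>params \<phi>. tpars (\<tau> a))
     \<and> (\<forall>v. (\<forall>a\<in>params \<phi>. tval v (\<tau> a) = a) \<longrightarrow> (sat I v \<psi> = sat I (\<lambda>j. tval v ((\<sigma>(i:=Var z)) j)) \<phi>))"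
    using FEx.IH[of "\<sigma>(i:=Var z)"] by (elim exE)
  have fvs: "fv (FEx z \<psi>) \<subseteq> (\<Union>j\<in>fv (FEx i \<phi>). tvars (\<sigma> j)) \<union> (\<Union>a\<in>params (FEx i \<phi>). tvars (\<tau> a))"
  proof
    fix x assume "x \<in> fv (FEx z \<psi>)"
    then have x: "x \<in> fv \<psi>" "x \<noteq> z" by auto
    then have "x \<in> (\<Union>j\<in>fv \<phi>. tvars ((\<sigma>(i:=Var z)) j)) \<union> (\<Union>a\<in>params \<phi>. tvars (\<tau> a))"
      using \<psi> by blast
    then consider j where "j \<in> fv \<phi>" "x \<in> tvars ((\<sigma>(i:=Var z)) j)" | a where "a \<in> params \<phi>" "x \<in> tvars (\<tau> a)"
      by blast
    then show "x \<in> (\<Union>j\<in>fv (FEx i \<phi>). tvars (\<sigma> j)) \<union> (\<Union>a\<in>params (FEx i \<phi>). tvars (\<tau> a))"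
    proof cases
      case (1 j)
      then have "j \<noteq> i" using x by (auto split: if_splits)
      then show ?thesis using 1 by auto
    qed auto
  qed
  have ps: "params (FEx z \<psi>) \<subseteq> (\<Union>j\<in>fv (FEx i \<phi>). tpars (\<sigma> j)) \<union> (\<Union>a\<in>params (FEx i \<phi>). tpars (\<tau> a))"
  proof
    fix x assume "x \<in> params (FEx z \<psi>)"
    then have "x \<in> (\<Union>j\<in>fv \<phi>. tpars ((\<sigma>(i:=Var z)) j)) \<union> (\<Union>a\<in>params \<phi>. tpars (\<tau> a))"
      using \<psi> by (simp only: params.simps) blast
    then consider j where "j \<in> fv \<phi>" "x \<in> tpars ((\<sigma>(i:=Var z)) j)" | a where "a \<in> params \<phi>" "x \<in> tpars (\<tau> a)"
      by blast
    then show "x \<in> (\<Union>j\<in>fv (FEx i \<phi>). tpars (\<sigma> j)) \<union> (\<Union>a\<in>params (FEx i \<phi>). tpars (\<tau> a))"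
    proof cases
      case (1 j)
      then have "j \<noteq> i" by (auto split: if_splits)
      then show ?thesis using 1 by auto
    qed auto
  qed
  have "sat I v (FEx z \<psi>) = sat I (\<lambda>j. tval v (\<sigma> j)) (FEx i \<phi>)"
    if h: "\<forall>a\<in>params (FEx i \<phi>). tval v (\<tau> a) = a" for v
  proof -
    have "sat I (v(z:=b)) \<psi> = sat I ((\<lambda>j. tval v (\<sigma> j))(i:=b)) \<phi>" for b
    proof -
      have h2: "\<forall>a\<in>params \<phi>. tval (v(z:=b)) (\<tau> a) = a"
      proof
        fix a assume a: "a \<in> params \<phi>"
        have "tval (v(z:=b)) (\<tau> a) = tval v (\<tau> a)" using z a by (intro tval_agree) auto
        then show "tval (v(z:=b)) (\<tau> a) = a" using h a by simp
      qed
      have "sat I (v(z:=b)) \<psi> = sat I (\<lambda>j. tval (v(z:=b)) ((\<sigma>(i:=Var z)) j)) \<phi>"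
        using \<psi> h2 by blast
      also have "\<dots> = sat I ((\<lambda>j. tval v (\<sigma> j))(i:=b)) \<phi>"
      proof (rule sat_agree, intro ballI)
        fix j assume j: "j \<in> fv \<phi>"
        show "tval (v(z:=b)) ((\<sigma>(i:=Var z)) j) = ((\<lambda>j. tval v (\<sigma> j))(i:=b)) j"
        proof (cases "j = i")
          case False
          then have "tval (v(z:=b)) (\<sigma> j) = tval v (\<sigma> j)" using z j by (intro tval_agree) auto
          then show ?thesis using False by simp
        qed simp
      qed
      finally show ?thesis .
    qed
    then show ?thesis by simp
  qed
  then show ?case using fvs ps by (intro exI[of _ "FEx z \<psi>"] conjI allI impI) auto
qed

lemma subst_par:
  fixes \<phi> :: "('r, 'a) fm" and \<tau> :: "'a \<Rightarrow> 'a tm" and I :: "'r \<Rightarrow> 'a list \<Rightarrow> bool"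
  shows "\<exists>\<psi>. fv \<psi> \<subseteq> fv \<phi> \<union> (\<Union>a\<in>params \<phi>. tvars (\<tau> a))
     \<and> params \<psi> \<subseteq> (\<Union>a\<in>params \<phi>. tpars (\<tau> a))
     \<and> (\<forall>v. (\<forall>a\<in>params \<phi>. tval v (\<tau> a) = a) \<longrightarrow> sat I v \<psi> = sat I v \<phi>)"
proof -
  obtain \<psi> where \<psi>: "fv \<psi> \<subseteq> (\<Union>i\<in>fv \<phi>. tvars (Var i :: 'a tm)) \<union> (\<Union>a\<in>params \<phi>. tvars (\<tau> a))
     \<and> params \<psi> \<subseteq> (\<Union>i\<in>fv \<phi>. tpars (Var i :: 'a tm)) \<union> (\<Union>a\<in>params \<phi>. tpars (\<tau> a))
     \<and> (\<forall>v. (\<forall>a\<in>params \<phi>. tval v (\<tau> a) = a) \<longrightarrow> (sat I v \<psi> = sat I (\<lambda>i. tval v (Var i)) \<phi>))"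
    using subst_ex[where \<phi>=\<phi> and \<sigma>=Var and \<tau>=\<tau> and I=I] by (elim exE)
  have "(\<Union>i\<in>fv \<phi>. tvars (Var i :: 'a tm)) = fv \<phi>" by auto
  moreover have "(\<Union>i\<in>fv \<phi>. tpars (Var i :: 'a tm)) = {}" by auto
  moreover have "(\<lambda>i. tval v (Var i)) = v" for v by auto
  ultimately show ?thesis using \<psi> by (intro exI[of _ \<psi>]) simp
qed

definition efm :: "('r \<Rightarrow> 'a list \<Rightarrow> bool) \<Rightarrow> 'a set \<Rightarrow> nat set \<Rightarrow> ((nat \<Rightarrow> 'a) \<Rightarrow> bool) \<Rightarrow> bool" where
  "efm I A V Q \<longleftrightarrow> (\<exists>\<phi>. params \<phi> \<subseteq> A \<and> fv \<phi> \<subseteq> V \<and> (\<forall>v. sat I v \<phi> = Q v))"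

lemma efm_mono: "efm I A V Q \<Longrightarrow> A \<subseteq> A' \<Longrightarrow> V \<subseteq> V' \<Longrightarrow> efm I A' V' Q"
  unfolding efm_def by blast

lemma efm_cong: "efm I A V Q \<Longrightarrow> (\<And>v. Q v = Q' v) \<Longrightarrow> efm I A V Q'"
  unfolding efm_def by metis

lemma efm_dep: "efm I A V Q \<Longrightarrow> (\<forall>i\<in>V. v i = w i) \<Longrightarrow> Q v = Q w"
  unfolding efm_def using sat_agree by (metis subsetD)

lemma efm_true: "efm I A V (\<lambda>_. True)"
  unfolding efm_def by (rule exI[of _ "FEx 0 (FEq (Var 0) (Var 0))"]) auto

lemma efm_eq: "efm I (tpars s \<union> tpars t) (tvars s \<union> tvars t) (\<lambda>v. tval v s = tval v t)"
  unfolding efm_def by (rule exI[of _ "FEq s t"]) auto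

lemma efm_not: "efm I A V Q \<Longrightarrow> efm I A V (\<lambda>v. \<not> Q v)"
  unfolding efm_def by (metis fv.simps(3) params.simps(3) sat.simps(3))

lemma efm_and: "efm I A V Q \<Longrightarrow> efm I A V Q' \<Longrightarrow> efm I A V (\<lambda>v. Q v \<and> Q' v)"
proof -
  assume "efm I A V Q" "efm I A V Q'"
  then obtain \<phi> \<psi> where "params \<phi> \<subseteq> A \<and> fv \<phi> \<subseteq> V \<and> (\<forall>v. sat I v \<phi> = Q v)"
    "params \<psi> \<subseteq> A \<and> fv \<psi> \<subseteq> V \<and> (\<forall>v. sat I v \<psi> = Q' v)" unfolding efm_def by blast
  then show ?thesis unfolding efm_def by (intro exI[of _ "FAnd \<phi> \<psi>"]) auto
qed

lemma efm_ex: "efm I A V Q \<Longrightarrow> efm I A (V - {i}) (\<lambda>v. \<exists>a. Q (v(i:=a)))"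
proof -
  assume "efm I A V Q"
  then obtain \<phi> where "params \<phi> \<subseteq> A \<and> fv \<phi> \<subseteq> V \<and> (\<forall>v. sat I v \<phi> = Q v)"
    unfolding efm_def by blast
  then show ?thesis unfolding efm_def by (intro exI[of _ "FEx i \<phi>"]) auto
qed

lemma efm_subst:
  assumes "efm I A V Q"
  shows "efm I (A \<union> (\<Union>i\<in>V. tpars (\<sigma> i))) (\<Union>i\<in>V. tvars (\<sigma> i)) (\<lambda>v. Q (\<lambda>i. tval v (\<sigma> i)))"
proof -
  obtain \<phi> where \<phi>: "params \<phi> \<subseteq> A" "fv \<phi> \<subseteq> V" "\<forall>v. sat I v \<phi> = Q v"
    using assms unfolding efm_def by blast
  obtain \<psi> where \<psi>: "fv \<psi> \<subseteq> (\<Union>i\<in>fv \<phi>. tvars (\<sigma> i)) \<union> (\<Union>a\<in>params \<phi>. tvars (Par a))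
     \<and> params \<psi> \<subseteq> (\<Union>i\<in>fv \<phi>. tpars (\<sigma> i)) \<union> (\<Union>a\<in>params \<phi>. tpars (Par a))
     \<and> (\<forall>v. (\<forall>a\<in>params \<phi>. tval v (Par a) = a) \<longrightarrow> (sat I v \<psi> = sat I (\<lambda>i. tval v (\<sigma> i)) \<phi>))"
    using subst_ex[where \<phi>=\<phi> and \<sigma>=\<sigma> and \<tau>=Par and I=I] by (elim exE)
  show ?thesis unfolding efm_def
  proof (intro exI[of _ \<psi>] conjI allI)
    show "params \<psi> \<subseteq> A \<union> (\<Union>i\<in>V. tpars (\<sigma> i))" using \<psi> \<phi>(1,2) by fastforce
    have "fv \<psi> \<subseteq> (\<Union>i\<in>fv \<phi>. tvars (\<sigma> i))" using \<psi> by simp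
    also have "\<dots> \<subseteq> (\<Union>i\<in>V. tvars (\<sigma> i))" using \<phi>(2) by (rule UN_mono) auto
    finally show "fv \<psi> \<subseteq> (\<Union>i\<in>V. tvars (\<sigma> i))" .
    fix v show "sat I v \<psi> = Q (\<lambda>i. tval v (\<sigma> i))" using \<psi> \<phi> by simp
  qed
qed

lemma efm_ball: "finite K \<Longrightarrow> (\<forall>k\<in>K. efm I A V (Q k)) \<Longrightarrow> efm I A V (\<lambda>v. \<forall>k\<in>K. Q k v)"
proof (induction K rule: finite_induct)
  case empty then show ?case by (simp add: efm_true)
next
  case (insert x F)
  then have "efm I A V (\<lambda>v. Q x v \<and> (\<forall>k\<in>F. Q k v))" by (intro efm_and) auto
  then show ?case by (rule efm_cong) auto
qed

lemma efm_exs: "finite X \<Longrightarrow> efm I A V Q \<Longrightarrow> efm I A (V - X) (\<lambda>v. \<exists>u. Q (\<lambda>i. if i \<in> X then u i else v i))"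
proof (induction X rule: finite_induct)
  case empty then show ?case by simp
next
  case (insert x X)
  then have "efm I A (V - X - {x}) (\<lambda>v. \<exists>b. \<exists>u. Q (\<lambda>i. if i \<in> X then u i else (v(x:=b)) i))"
    by (intro efm_ex) auto
  moreover have "(\<exists>b. \<exists>u. Q (\<lambda>i. if i \<in> X then u i else (v(x:=b)) i)) =
     (\<exists>u. Q (\<lambda>i. if i \<in> insert x X then u i else v i))" for v
  proof
    assume "\<exists>b. \<exists>u. Q (\<lambda>i. if i \<in> X then u i else (v(x:=b)) i)"
    then obtain b u where "Q (\<lambda>i. if i \<in> X then u i else (v(x:=b)) i)" by blast
    moreover have "(\<lambda>i. if i \<in> X then u i else (v(x:=b)) i) = (\<lambda>i. if i \<in> insert x X then (u(x:=b)) i else v i)"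
      using insert.hyps by auto
    ultimately show "\<exists>u. Q (\<lambda>i. if i \<in> insert x X then u i else v i)" by auto
  next
    assume "\<exists>u. Q (\<lambda>i. if i \<in> insert x X then u i else v i)"
    then obtain u where "Q (\<lambda>i. if i \<in> insert x X then u i else v i)" by blast
    moreover have "(\<lambda>i. if i \<in> insert x X then u i else v i) = (\<lambda>i. if i \<in> X then u i else (v(x:=u x)) i)"
      using insert.hyps by auto
    ultimately show "\<exists>b. \<exists>u. Q (\<lambda>i. if i \<in> X then u i else (v(x:=b)) i)" by auto
  qed
  ultimately have "efm I A (V - X - {x}) (\<lambda>v. \<exists>u. Q (\<lambda>i. if i \<in> insert x X then u i else v i))"
    by (rule efm_cong)
  then show ?case by (rule efm_mono) auto
qed

definition atleast :: "nat \<Rightarrow> 'a set \<Rightarrow> bool" where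
  "atleast k S \<longleftrightarrow> infinite S \<or> k \<le> card S"

lemma atleast_0[simp]: "atleast 0 S" by (simp add: atleast_def)

lemma atleast_Suc: "atleast (Suc k) S \<longleftrightarrow> (\<exists>a\<in>S. atleast k (S - {a}))"
proof
  assume h: "atleast (Suc k) S"
  show "\<exists>a\<in>S. atleast k (S - {a})"
  proof (cases "finite S")
    case True
    then have "Suc k \<le> card S" using h by (simp add: atleast_def)
    then obtain a where "a \<in> S" by (metis card.empty ex_in_conv not_less_eq_eq zero_le)
    then show ?thesis using True \<open>Suc k \<le> card S\<close> by (intro bexI[of _ a]) (auto simp: atleast_def)
  next
    case False
    then obtain a where "a \<in> S" by (metis ex_in_conv finite.emptyI)
    then show ?thesis using False by (intro bexI[of _ a]) (auto simp: atleast_def)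
  qed
next
  assume "\<exists>a\<in>S. atleast k (S - {a})"
  then obtain a where "a \<in> S" "atleast k (S - {a})" by blast
  then show "atleast (Suc k) S" unfolding atleast_def
    by (metis Suc_le_mono card_Diff_singleton_if card.remove finite_Diff)
qed

lemma atleast_all: "(\<forall>k. atleast k S) \<longleftrightarrow> infinite S"
  by (auto simp: atleast_def) (metis Suc_n_not_le_n)

lemma efm_neq_set:
  "finite W \<Longrightarrow> efm I {} (insert w W) (\<lambda>v. v w \<notin> v ` W)"
proof -
  assume W: "finite W"
  have "\<forall>u\<in>W. efm I {} (insert w W) (\<lambda>v. \<not> (tval v (Var w) = tval v (Var u)))"
  proof
    fix u assume "u \<in> W"
    have "efm I (tpars (Var w) \<union> tpars (Var u)) (tvars (Var w) \<union> tvars (Var u))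
       (\<lambda>v. tval v (Var w) = tval v (Var u))" using efm_eq[of I "Var w" "Var u"] by simp
    then have "efm I {} (insert w W) (\<lambda>v. tval v (Var w) = tval v (Var u))"
      by (rule efm_mono) (use \<open>u \<in> W\<close> in auto)
    then show "efm I {} (insert w W) (\<lambda>v. \<not> (tval v (Var w) = tval v (Var u)))" by (rule efm_not)
  qed
  then have "efm I {} (insert w W) (\<lambda>v. \<forall>u\<in>W. \<not> (tval v (Var w) = tval v (Var u)))"
    using W by (intro efm_ball)
  then show ?thesis by (rule efm_cong) auto
qed

lemma efm_count_gen:
  assumes Q: "efm I A V Q" and V: "finite V"
  shows "finite W \<Longrightarrow> efm I A ((V - {x}) \<union> W) (\<lambda>v. atleast k ({a. Q (v(x:=a))} - v ` W))"
proof (induction k arbitrary: W)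
  case 0 then show ?case by (simp add: efm_true)
next
  case (Suc k)
  have fin: "finite (V \<union> W \<union> {x})" using V Suc.prems by simp
  obtain w where w: "w \<notin> V \<union> W \<union> {x}" using ex_new_if_finite[OF infinite_UNIV_nat fin] by (elim exE)
  have G: "efm I A ((V - {x}) \<union> insert w W) (\<lambda>v. atleast k ({a. Q (v(x:=a))} - v ` insert w W))"
    by (rule Suc.IH) (simp add: Suc.prems)
  have H1: "efm I A (insert w (V - {x})) (\<lambda>v. Q (\<lambda>i. tval v ((Var(x:=Var w)) i)))"
    by (rule efm_mono[OF efm_subst[OF Q]]) (auto split: if_splits)
  have H2: "efm I A (insert w W) (\<lambda>v. v w \<notin> v ` W)"
    using efm_neq_set[OF Suc.prems, of I w] by (rule efm_mono) auto
  have H1': "efm I A (insert w ((V - {x}) \<union> W)) (\<lambda>v. Q (\<lambda>i. tval v ((Var(x:=Var w)) i)))"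
    by (rule efm_mono[OF H1]) auto
  have H2': "efm I A (insert w ((V - {x}) \<union> W)) (\<lambda>v. v w \<notin> v ` W)"
    by (rule efm_mono[OF H2]) auto
  have G': "efm I A (insert w ((V - {x}) \<union> W)) (\<lambda>v. atleast k ({a. Q (v(x:=a))} - v ` insert w W))"
    by (rule efm_mono[OF G]) auto
  note T = efm_ex[OF efm_and[OF H1' efm_and[OF H2' G']], of w]
  show ?case
  proof (rule efm_mono[OF efm_cong[OF T]])
    fix v
    let ?S = "{a. Q (v(x:=a))} - v ` W"
    have e1: "Q (\<lambda>i. tval (v(w:=b)) ((Var(x:=Var w)) i)) = Q (v(x:=b))" for b
      by (rule efm_dep[OF Q]) (use w in auto)
    have e2: "(v(w:=b)) ` W = v ` W" for b using w by auto
    have e3: "{a. Q ((v(w:=b))(x:=a))} = {a. Q (v(x:=a))}" for b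
    proof -
      have "Q ((v(w:=b))(x:=a)) = Q (v(x:=a))" for a
        by (rule efm_dep[OF Q]) (use w in auto)
      then show ?thesis by simp
    qed
    have e4: "(v(w:=b)) ` insert w W = insert b (v ` W)" for b using w by auto
    show "(\<exists>b. Q (\<lambda>i. tval (v(w:=b)) ((Var(x:=Var w)) i)) \<and> (v(w:=b)) w \<notin> (v(w:=b)) ` W
      \<and> atleast k ({a. Q ((v(w:=b))(x:=a))} - (v(w:=b)) ` insert w W)) = atleast (Suc k) ?S"
    proof -
      have e5: "({a. Q (v(x:=a))} - insert b (v ` W)) = ?S - {b}" for b by blast
      show ?thesis unfolding atleast_Suc e1 e2 e3 e4 e5 fun_upd_same by blast
    qed
  qed auto
qed

lemma efm_count:
  assumes "efm I A V Q" "finite V"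
  shows "efm I A (V - {x}) (\<lambda>v. atleast k {a. Q (v(x:=a))})"
  using efm_count_gen[OF assms, of "{}" x k] by simp

lemma acl_mono: "A \<subseteq> B \<Longrightarrow> acl I A \<subseteq> acl I B"
  unfolding acl_def by blast

lemma efm_acl: "efm I A {0} Q \<Longrightarrow> finite {c. Q (\<lambda>_. c)} \<Longrightarrow> Q (\<lambda>_. b) \<Longrightarrow> b \<in> acl I A"
proof -
  assume "efm I A {0} Q" "finite {c. Q (\<lambda>_. c)}" "Q (\<lambda>_. b)"
  then obtain \<phi> where "params \<phi> \<subseteq> A" "fv \<phi> \<subseteq> {0}" "\<forall>v. sat I v \<phi> = Q v"
    unfolding efm_def by blast
  then show ?thesis unfolding acl_def using \<open>finite {c. Q (\<lambda>_. c)}\<close> \<open>Q (\<lambda>_. b)\<close>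
    by (intro CollectI exI[of _ \<phi>]) simp
qed

lemma acl_efm: "b \<in> acl I A \<Longrightarrow> \<exists>Q. efm I A {0} Q \<and> finite {c. Q (\<lambda>_. c)} \<and> Q (\<lambda>_. b)"
proof -
  assume "b \<in> acl I A"
  then obtain \<phi> where "params \<phi> \<subseteq> A" "fv \<phi> \<subseteq> {0}" "finite {c. sat I (\<lambda>_. c) \<phi>}" "sat I (\<lambda>_. b) \<phi>"
    unfolding acl_def by blast
  then show ?thesis unfolding efm_def by (intro exI[of _ "\<lambda>v. sat I v \<phi>"] conjI exI[of _ \<phi>]) auto
qed

lemma acl_trans1:
  assumes b: "b \<in> acl I (insert c A)" and c: "c \<in> acl I A"
  shows "b \<in> acl I A"
proof -
  obtain \<phi> where \<phi>: "params \<phi> \<subseteq> insert c A" "fv \<phi> \<subseteq> {0}" "finite {a. sat I (\<lambda>_. a) \<phi>}"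
    "sat I (\<lambda>_. b) \<phi>" using b unfolding acl_def by blast
  obtain \<psi> where \<psi>: "params \<psi> \<subseteq> A" "fv \<psi> \<subseteq> {0}" "finite {a. sat I (\<lambda>_. a) \<psi>}"
    "sat I (\<lambda>_. c) \<psi>" using c unfolding acl_def by blast
  define \<tau> where "\<tau> = (\<lambda>a. if a = c then Var 1 else Par a)"
  obtain \<phi>' where \<phi>': "fv \<phi>' \<subseteq> fv \<phi> \<union> (\<Union>a\<in>params \<phi>. tvars (\<tau> a))
     \<and> params \<phi>' \<subseteq> (\<Union>a\<in>params \<phi>. tpars (\<tau> a))
     \<and> (\<forall>v. (\<forall>a\<in>params \<phi>. tval v (\<tau> a) = a) \<longrightarrow> sat I v \<phi>' = sat I v \<phi>)"
    using subst_par[where \<phi>=\<phi> and \<tau>=\<tau> and I=I] by (elim exE)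
  define Q where "Q = (\<lambda>v. sat I v \<phi>')"
  have Qe: "efm I A {0,1} Q" unfolding efm_def Q_def
  proof (intro exI[of _ \<phi>'] conjI allI)
    have "(\<Union>a\<in>params \<phi>. tpars (\<tau> a)) \<subseteq> A"
    proof
      fix x assume "x \<in> (\<Union>a\<in>params \<phi>. tpars (\<tau> a))"
      then obtain a where "a \<in> params \<phi>" "x \<in> tpars (\<tau> a)" by blast
      then show "x \<in> A" using \<phi>(1) by (cases "a = c") (auto simp: \<tau>_def)
    qed
    then show "params \<phi>' \<subseteq> A" using \<phi>' by blast
    have "(\<Union>a\<in>params \<phi>. tvars (\<tau> a)) \<subseteq> {1}"
    proof
      fix x assume "x \<in> (\<Union>a\<in>params \<phi>. tvars (\<tau> a))"
      then obtain a where "a \<in> params \<phi>" "x \<in> tvars (\<tau> a)" by blast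
      then show "x \<in> {1}" by (cases "a = c") (auto simp: \<tau>_def)
    qed
    then show "fv \<phi>' \<subseteq> {0, 1}" using \<phi>' \<phi>(2) by blast
  qed simp
  have Qsem: "v 1 = c \<Longrightarrow> Q v = sat I v \<phi>" for v
    unfolding Q_def using \<phi>' by (auto simp: \<tau>_def)
  have Qsem2: "Q ((\<lambda>_. a)(1:=c)) = sat I (\<lambda>_. a) \<phi>" for a
  proof -
    have "sat I ((\<lambda>_. a)(1:=c)) \<phi> = sat I (\<lambda>_. a) \<phi>" by (rule sat_agree) (use \<phi>(2) in auto)
    then show ?thesis using Qsem[of "(\<lambda>_. a)(1:=c)"] by simp
  qed
  have R1: "efm I A {1} (\<lambda>v. sat I (\<lambda>_. v 1) \<psi>)"
  proof -
    have "efm I A {0} (\<lambda>v. sat I v \<psi>)" unfolding efm_def using \<psi> by blast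
    from efm_subst[OF this, of "\<lambda>_. Var 1"]
    have "efm I A {1} (\<lambda>v. sat I (\<lambda>i. tval v (Var 1)) \<psi>)" by (rule efm_mono) auto
    then show ?thesis by simp
  qed
  define N where "N = card {a. sat I (\<lambda>_. a) \<phi>}"
  have R3: "efm I A ({0,1} - {0}) (\<lambda>v. atleast (Suc N) {a. Q (v(0:=a))})"
    by (rule efm_count[OF Qe]) simp
  have R: "efm I A {0,1} (\<lambda>v. sat I (\<lambda>_. v 1) \<psi> \<and> Q v \<and> \<not> atleast (Suc N) {a. Q (v(0:=a))})"
    by (rule efm_and[OF efm_mono[OF R1] efm_and[OF Qe efm_not[OF efm_mono[OF R3]]]]) auto
  define \<theta> where "\<theta> = (\<lambda>v. \<exists>z. sat I (\<lambda>_. (v(1:=z)) 1) \<psi> \<and> Q (v(1:=z)) \<and> \<not> atleast (Suc N) {a. Q ((v(1:=z))(0:=a))})"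
  have Te: "efm I A {0} \<theta>"
    unfolding \<theta>_def by (rule efm_mono[OF efm_ex[OF R, of 1]]) auto
  have Qdep: "Q v = Q w" if "v 0 = w 0" "v 1 = w 1" for v w
    using efm_dep[OF Qe, of v w] that by auto
  show ?thesis
  proof (rule efm_acl[OF Te])
    show "\<theta> (\<lambda>_. b)" unfolding \<theta>_def
    proof (intro exI[of _ c] conjI)
      show "sat I (\<lambda>_. ((\<lambda>_. b)(1:=c)) 1) \<psi>" using \<psi>(4) by simp
      show "Q ((\<lambda>_. b)(1:=c))" using Qsem2 \<phi>(4) by simp
      have "{a. Q (((\<lambda>_. b)(1:=c))(0:=a))} = {a. sat I (\<lambda>_. a) \<phi>}"
      proof -
        have "Q (((\<lambda>_. b)(1:=c))(0:=a)) = Q ((\<lambda>_. a)(1:=c))" for a by (rule Qdep) auto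
        then show ?thesis using Qsem2 by simp
      qed
      then show "\<not> atleast (Suc N) {a. Q (((\<lambda>_. b)(1:=c))(0:=a))}"
        using \<phi>(3) by (simp add: atleast_def N_def)
    qed
    define Z where "Z = {z. sat I (\<lambda>_. z) \<psi> \<and> finite {a. Q ((\<lambda>_. a)(1:=z))}}"
    have "finite Z" unfolding Z_def by (rule finite_subset[OF _ \<psi>(3)]) auto
    then have fin: "finite (\<Union>z\<in>Z. {a. Q ((\<lambda>_. a)(1:=z))})" unfolding Z_def by auto
    show "finite {b'. \<theta> (\<lambda>_. b')}"
    proof (rule finite_subset[OF _ fin])
      show "{b'. \<theta> (\<lambda>_. b')} \<subseteq> (\<Union>z\<in>Z. {a. Q ((\<lambda>_. a)(1:=z))})"
      proof
        fix b' assume "b' \<in> {b'. \<theta> (\<lambda>_. b')}"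
        then obtain z where z: "sat I (\<lambda>_. z) \<psi>" "Q ((\<lambda>_. b')(1:=z))"
          "\<not> atleast (Suc N) {a. Q (((\<lambda>_. b')(1:=z))(0:=a))}" unfolding \<theta>_def by auto
        have "Q (((\<lambda>_. b')(1:=z))(0:=a)) = Q ((\<lambda>_. a)(1:=z))" for a by (rule Qdep) auto
        then have "finite {a. Q ((\<lambda>_. a)(1:=z))}" using z(3) by (simp add: atleast_def)
        then have "z \<in> Z" using z(1) unfolding Z_def by simp
        then show "b' \<in> (\<Union>z\<in>Z. {a. Q ((\<lambda>_. a)(1:=z))})" using z(2) by auto
      qed
    qed
  qed
qed

lemma acl_trans_fin:
  "finite F \<Longrightarrow> F \<subseteq> acl I A \<Longrightarrow> b \<in> acl I (A \<union> F) \<Longrightarrow> b \<in> acl I A"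
proof (induction F arbitrary: b rule: finite_induct)
  case empty then show ?case by simp
next
  case (insert c F)
  have "c \<in> acl I (A \<union> F)" using insert.prems acl_mono[of A "A \<union> F"] by auto
  moreover have "b \<in> acl I (insert c (A \<union> F))" using insert.prems by simp
  ultimately have "b \<in> acl I (A \<union> F)" by (rule acl_trans1[rotated])
  then show ?case using insert by auto
qed

lemma acl_norm:
  assumes "finite B" "B \<subseteq> acl I {}"
  shows "acl I (X \<union> B) = acl I X"
proof
  show "acl I X \<subseteq> acl I (X \<union> B)" by (rule acl_mono) auto
  have "B \<subseteq> acl I X" using assms(2) acl_mono[of "{}" X] by auto
  then show "acl I (X \<union> B) \<subseteq> acl I X" using acl_trans_fin[OF assms(1)] by blast
qed

lemma efm_defset: "efm I A {..<k} Q \<Longrightarrow>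
  \<exists>\<phi>. params \<phi> \<subseteq> A \<and> fv \<phi> \<subseteq> {..<k} \<and> defset I k \<phi> = {xs. length xs = k \<and> Q (\<lambda>i. xs ! i)}"
  unfolding efm_def defset_def by auto

lemma efm_of_fm: "params \<phi> \<subseteq> A \<Longrightarrow> fv \<phi> \<subseteq> V \<Longrightarrow> efm I A V (\<lambda>v. sat I v \<phi>)"
  unfolding efm_def by blast

lemma efm_proj:
  assumes \<phi>: "params \<phi> \<subseteq> B" "fv \<phi> \<subseteq> {..<k}" and J: "J \<subseteq> {..<k}" and g: "\<forall>j\<in>J. g j < N"
  shows "efm I B (g ` J) (\<lambda>v. \<exists>w\<in>defset I k \<phi>. \<forall>j\<in>J. w ! j = v (g j))"
proof -
  have finJ: "finite J" using J finite_subset by blast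
  have e1: "efm I B {N..<N+k} (\<lambda>v. sat I (\<lambda>t. v (t + N)) \<phi>)"
  proof -
    from efm_subst[OF efm_of_fm[OF \<phi>], where \<sigma>="\<lambda>i. Var (i + N)"]
    have "efm I B {N..<N+k} (\<lambda>v. sat I (\<lambda>i. tval v (Var (i + N))) \<phi>)"
      by (rule efm_mono) auto
    then show ?thesis by simp
  qed
  have e2: "efm I B (g ` J \<union> {N..<N+k}) (\<lambda>v. \<forall>j\<in>J. tval v (Var (j + N)) = tval v (Var (g j)))"
  proof (rule efm_ball[OF finJ], rule ballI)
    fix j assume j: "j \<in> J"
    have "efm I (tpars (Var (j+N)) \<union> tpars (Var (g j))) (tvars (Var (j+N)) \<union> tvars (Var (g j)))
       (\<lambda>v. tval v (Var (j + N)) = tval v (Var (g j)))" using efm_eq[of I "Var (j+N)" "Var (g j)"] by simp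
    then show "efm I B (g ` J \<union> {N..<N+k}) (\<lambda>v. tval v (Var (j + N)) = tval v (Var (g j)))"
      by (rule efm_mono) (use j J in auto)
  qed
  have e: "efm I B (g ` J \<union> {N..<N+k}) (\<lambda>v. sat I (\<lambda>t. v (t + N)) \<phi> \<and> (\<forall>j\<in>J. tval v (Var (j + N)) = tval v (Var (g j))))"
    using efm_and[OF efm_mono[OF e1] e2] by auto
  note ee = efm_exs[OF _ e, of "{N..<N+k}"]
  have ee2: "efm I B (g ` J) (\<lambda>v. \<exists>u. sat I (\<lambda>t. (\<lambda>i. if i \<in> {N..<N+k} then u i else v i) (t + N)) \<phi> \<and>
      (\<forall>j\<in>J. tval (\<lambda>i. if i \<in> {N..<N+k} then u i else v i) (Var (j + N)) =
               tval (\<lambda>i. if i \<in> {N..<N+k} then u i else v i) (Var (g j))))"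
    by (rule efm_mono[OF ee]) (use g in auto)
  show ?thesis
  proof (rule efm_cong[OF ee2])
    fix v
    show "(\<exists>u. sat I (\<lambda>t. (\<lambda>i. if i \<in> {N..<N+k} then u i else v i) (t + N)) \<phi> \<and>
      (\<forall>j\<in>J. tval (\<lambda>i. if i \<in> {N..<N+k} then u i else v i) (Var (j + N)) =
               tval (\<lambda>i. if i \<in> {N..<N+k} then u i else v i) (Var (g j)))) =
      (\<exists>w\<in>defset I k \<phi>. \<forall>j\<in>J. w ! j = v (g j))"
    proof
      assume "\<exists>u. sat I (\<lambda>t. (\<lambda>i. if i \<in> {N..<N+k} then u i else v i) (t + N)) \<phi> \<and>
      (\<forall>j\<in>J. tval (\<lambda>i. if i \<in> {N..<N+k} then u i else v i) (Var (j + N)) =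
               tval (\<lambda>i. if i \<in> {N..<N+k} then u i else v i) (Var (g j)))"
      then obtain u where u1: "sat I (\<lambda>t. (\<lambda>i. if i \<in> {N..<N+k} then u i else v i) (t + N)) \<phi>"
        and u2: "\<forall>j\<in>J. (\<lambda>i. if i \<in> {N..<N+k} then u i else v i) (j + N) =
               (\<lambda>i. if i \<in> {N..<N+k} then u i else v i) (g j)" by auto
      define w where "w = map (\<lambda>t. u (t + N)) [0..<k]"
      have "sat I (\<lambda>i. w ! i) \<phi>"
      proof -
        have "sat I (\<lambda>i. w ! i) \<phi> = sat I (\<lambda>t. (\<lambda>i. if i \<in> {N..<N+k} then u i else v i) (t + N)) \<phi>"
          by (rule sat_agree) (use \<phi>(2) in \<open>auto simp: w_def\<close>)
        then show ?thesis using u1 by simp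
      qed
      then have "w \<in> defset I k \<phi>" unfolding defset_def w_def by simp
      moreover have "\<forall>j\<in>J. w ! j = v (g j)"
      proof
        fix j assume j: "j \<in> J"
        then have "j < k" "g j < N" using J g by auto
        then show "w ! j = v (g j)" using u2 j by (auto simp: w_def)
      qed
      ultimately show "\<exists>w\<in>defset I k \<phi>. \<forall>j\<in>J. w ! j = v (g j)" by blast
    next
      assume "\<exists>w\<in>defset I k \<phi>. \<forall>j\<in>J. w ! j = v (g j)"
      then obtain w where w: "w \<in> defset I k \<phi>" "\<forall>j\<in>J. w ! j = v (g j)" by blast
      define u where "u = (\<lambda>i. w ! (i - N))"
      have len: "length w = k" and sw: "sat I (\<lambda>i. w ! i) \<phi>" using w(1) unfolding defset_def by auto
      have "sat I (\<lambda>t. (\<lambda>i. if i \<in> {N..<N+k} then u i else v i) (t + N)) \<phi>"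
      proof -
        have "sat I (\<lambda>t. (\<lambda>i. if i \<in> {N..<N+k} then u i else v i) (t + N)) \<phi> = sat I (\<lambda>i. w ! i) \<phi>"
          by (rule sat_agree) (use \<phi>(2) in \<open>auto simp: u_def\<close>)
        then show ?thesis using sw by simp
      qed
      moreover have "\<forall>j\<in>J. tval (\<lambda>i. if i \<in> {N..<N+k} then u i else v i) (Var (j + N)) =
               tval (\<lambda>i. if i \<in> {N..<N+k} then u i else v i) (Var (g j))"
      proof
        fix j assume j: "j \<in> J"
        then have "j < k" "g j < N" using J g by auto
        then show "tval (\<lambda>i. if i \<in> {N..<N+k} then u i else v i) (Var (j + N)) =
               tval (\<lambda>i. if i \<in> {N..<N+k} then u i else v i) (Var (g j))"
          using w(2) j by (auto simp: u_def)
      qed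
      ultimately show "\<exists>u. sat I (\<lambda>t. (\<lambda>i. if i \<in> {N..<N+k} then u i else v i) (t + N)) \<phi> \<and>
      (\<forall>j\<in>J. tval (\<lambda>i. if i \<in> {N..<N+k} then u i else v i) (Var (j + N)) =
               tval (\<lambda>i. if i \<in> {N..<N+k} then u i else v i) (Var (g j)))" by blast
    qed
  qed
qed

lemma fiber_fm:
  assumes \<phi>: "params \<phi> \<subseteq> B" "fv \<phi> \<subseteq> {..<Suc k}"
  shows "\<exists>\<psi>. params \<psi> \<subseteq> insert c B \<and> fv \<psi> \<subseteq> {..<k} \<and>
     defset I k \<psi> = {w. length w = k \<and> w @ [c] \<in> defset I (Suc k) \<phi>}"
proof -
  define \<sigma> where "\<sigma> = (\<lambda>t. if t = k then Par c else Var t)"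
  from efm_subst[OF efm_of_fm[OF \<phi>], where \<sigma>=\<sigma>]
  have "efm I (insert c B) {..<k} (\<lambda>v. sat I (\<lambda>i. tval v (\<sigma> i)) \<phi>)"
    by (rule efm_mono) (auto simp: \<sigma>_def split: if_splits)
  then obtain \<psi> where \<psi>: "params \<psi> \<subseteq> insert c B" "fv \<psi> \<subseteq> {..<k}"
    "defset I k \<psi> = {xs. length xs = k \<and> sat I (\<lambda>i. tval (\<lambda>i. xs ! i) (\<sigma> i)) \<phi>}"
    using efm_defset by blast
  have "sat I (\<lambda>i. tval (\<lambda>i. w ! i) (\<sigma> i)) \<phi> = sat I (\<lambda>i. (w @ [c]) ! i) \<phi>" if "length w = k" for w
    by (rule sat_agree) (use \<phi>(2) that in \<open>auto simp: \<sigma>_def nth_append\<close>)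
  then have "{xs. length xs = k \<and> sat I (\<lambda>i. tval (\<lambda>i. xs ! i) (\<sigma> i)) \<phi>} = {w. length w = k \<and> w @ [c] \<in> defset I (Suc k) \<phi>}"
    unfolding defset_def by auto
  then have "defset I k \<psi> = {w. length w = k \<and> w @ [c] \<in> defset I (Suc k) \<phi>}"
    using \<psi>(3) by simp
  then show ?thesis using \<psi>(1,2) by blast
qed

lemma card_ordLess: "finite (A::'a set) \<Longrightarrow> infinite (UNIV::'a set) \<Longrightarrow> (card_of A, card_of (UNIV::'a set)) \<in> ordLess"
  using finite_ordLess_infinite[OF card_of_Well_order card_of_Well_order] by (simp add: Field_card_of)

lemma sat_realize:
  assumes S: "saturated I" and B: "finite B" and U: "infinite (UNIV::'a set)"
    and \<Sigma>: "\<forall>\<phi>\<in>\<Sigma>. fv \<phi> \<subseteq> {0} \<and> params \<phi> \<subseteq> B"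
    and fs: "\<And>\<Sigma>0 F. \<Sigma>0 \<subseteq> \<Sigma> \<Longrightarrow> finite \<Sigma>0 \<Longrightarrow> finite F \<Longrightarrow> \<exists>b. b \<notin> F \<and> (\<forall>\<phi>\<in>\<Sigma>0. sat I (\<lambda>_. b) \<phi>)"
  shows "\<exists>b::'a. b \<notin> acl I B \<and> (\<forall>\<phi>\<in>\<Sigma>. sat I (\<lambda>_. b) \<phi>)"
proof -
  define \<Theta> where "\<Theta> = {FNeg \<theta> | \<theta>. params \<theta> \<subseteq> B \<and> fv \<theta> \<subseteq> {0} \<and> finite {c. sat I (\<lambda>_. c) \<theta>}}"
  have "\<exists>b. \<forall>\<phi>\<in>\<Sigma> \<union> \<Theta>. sat I (\<lambda>_. b) \<phi>"
  proof (rule S[unfolded saturated_def, rule_format, of B], intro conjI)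
    show "(card_of B, card_of (UNIV::'a set)) \<in> ordLess" using card_ordLess[OF B U] .
    show "\<forall>\<phi>\<in>\<Sigma> \<union> \<Theta>. fv \<phi> \<subseteq> {0} \<and> params \<phi> \<subseteq> B"
    proof
      fix \<phi> assume "\<phi> \<in> \<Sigma> \<union> \<Theta>"
      then show "fv \<phi> \<subseteq> {0} \<and> params \<phi> \<subseteq> B"
      proof
        assume "\<phi> \<in> \<Theta>"
        then obtain \<theta> where "\<phi> = FNeg \<theta>" "params \<theta> \<subseteq> B" "fv \<theta> \<subseteq> {0}" unfolding \<Theta>_def by blast
        then show ?thesis by simp
      qed (use \<Sigma> in blast)
    qed
    show "\<forall>\<Sigma>0\<subseteq>\<Sigma> \<union> \<Theta>. finite \<Sigma>0 \<longrightarrow> (\<exists>b. \<forall>\<phi>\<in>\<Sigma>0. sat I (\<lambda>_. b) \<phi>)"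
    proof (intro allI impI)
      fix \<Sigma>0 assume h: "\<Sigma>0 \<subseteq> \<Sigma> \<union> \<Theta>" "finite \<Sigma>0"
      define F where "F = (\<Union>\<psi>\<in>\<Sigma>0 \<inter> \<Theta>. {c. \<not> sat I (\<lambda>_. c) \<psi>})"
      have "finite F" unfolding F_def
      proof (rule finite_UN_I)
        show "finite (\<Sigma>0 \<inter> \<Theta>)" using h by simp
        fix \<psi> assume "\<psi> \<in> \<Sigma>0 \<inter> \<Theta>"
        then obtain \<theta> where "\<psi> = FNeg \<theta>" "finite {c. sat I (\<lambda>_. c) \<theta>}" unfolding \<Theta>_def by blast
        then show "finite {c. \<not> sat I (\<lambda>_. c) \<psi>}" by simp
      qed
      then obtain b where b: "b \<notin> F" "\<forall>\<phi>\<in>\<Sigma>0 \<inter> \<Sigma>. sat I (\<lambda>_. b) \<phi>"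
        using fs[of "\<Sigma>0 \<inter> \<Sigma>" F] h(2) by blast
      have "\<forall>\<phi>\<in>\<Sigma>0. sat I (\<lambda>_. b) \<phi>"
      proof
        fix \<phi> assume "\<phi> \<in> \<Sigma>0"
        then show "sat I (\<lambda>_. b) \<phi>" using b h(1) unfolding F_def by blast
      qed
      then show "\<exists>b. \<forall>\<phi>\<in>\<Sigma>0. sat I (\<lambda>_. b) \<phi>" by blast
    qed
  qed
  then obtain b where b: "\<forall>\<phi>\<in>\<Sigma> \<union> \<Theta>. sat I (\<lambda>_. b) \<phi>" by blast
  have "b \<notin> acl I B"
  proof
    assume "b \<in> acl I B"
    then obtain \<theta> where "params \<theta> \<subseteq> B" "fv \<theta> \<subseteq> {0}" "finite {c. sat I (\<lambda>_. c) \<theta>}" "sat I (\<lambda>_. b) \<theta>"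
      unfolding acl_def by blast
    then have "FNeg \<theta> \<in> \<Theta>" unfolding \<Theta>_def by blast
    then have "sat I (\<lambda>_. b) (FNeg \<theta>)" using b by blast
    then show False using \<open>sat I (\<lambda>_. b) \<theta>\<close> by simp
  qed
  then show ?thesis using b by blast
qed

lemma sat_nonalg:
  assumes S: "saturated I" and B: "finite B" and Q: "efm I B {0} Q" and inf: "infinite {a::'a. Q (\<lambda>_. a)}"
  shows "\<exists>a. Q (\<lambda>_. a) \<and> a \<notin> acl I B"
proof -
  obtain \<phi> where \<phi>: "params \<phi> \<subseteq> B" "fv \<phi> \<subseteq> {0}" "\<forall>v. sat I v \<phi> = Q v" using Q unfolding efm_def by blast
  have U: "infinite (UNIV::'a set)" by (rule infinite_super[OF subset_UNIV inf])
  have "\<exists>b::'a. b \<notin> acl I B \<and> (\<forall>\<psi>\<in>{\<phi>}. sat I (\<lambda>_. b) \<psi>)"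
  proof (rule sat_realize[OF S B U])
    show "\<forall>\<psi>\<in>{\<phi>}. fv \<psi> \<subseteq> {0} \<and> params \<psi> \<subseteq> B" using \<phi>(1,2) by simp
    fix \<Sigma>0 F assume "\<Sigma>0 \<subseteq> {\<phi>}" "finite (F::'a set)"
    have "infinite ({a. Q (\<lambda>_. a)} - F)" using inf \<open>finite F\<close> by simp
    then obtain b where "b \<in> {a. Q (\<lambda>_. a)} - F" using infinite_imp_nonempty by blast
    then have "b \<notin> F" "sat I (\<lambda>_. b) \<phi>" using \<phi>(3) by auto
    then show "\<exists>b. b \<notin> F \<and> (\<forall>\<psi>\<in>\<Sigma>0. sat I (\<lambda>_. b) \<psi>)" using \<open>\<Sigma>0 \<subseteq> {\<phi>}\<close> by blast
  qed
  then obtain b where "b \<notin> acl I B" "sat I (\<lambda>_. b) \<phi>" by blast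
  then show ?thesis using \<phi>(3) by auto
qed

lemma proj1_efm:
  assumes \<phi>: "params \<phi> \<subseteq> B" "fv \<phi> \<subseteq> {..<k}" and j: "j < k"
  shows "efm I B {0} (\<lambda>v. \<exists>w\<in>defset I k \<phi>. w ! j = v 0)"
  using efm_proj[OF \<phi>, of "{j}" "\<lambda>_. 0" 1 I] j by simp

lemma tuple_fin_acl:
  assumes \<phi>: "params \<phi> \<subseteq> B" "fv \<phi> \<subseteq> {..<k}" and fin: "finite (defset I k \<phi>)"
    and w: "w \<in> defset I k \<phi>" and j: "j < k"
  shows "w ! j \<in> acl I B"
proof (rule efm_acl[OF proj1_efm[OF \<phi> j]])
  have "{c. \<exists>w\<in>defset I k \<phi>. w ! j = c} = (\<lambda>w. w ! j) ` defset I k \<phi>" by auto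
  then show "finite {c. \<exists>w\<in>defset I k \<phi>. w ! j = c}" using fin by simp
  show "\<exists>w'\<in>defset I k \<phi>. w' ! j = w ! j" using w by blast
qed

lemma inf_coord:
  assumes "D \<subseteq> {w. length w = k}" "infinite D"
  shows "\<exists>j<k. infinite ((\<lambda>w. w ! j) ` D)"
proof (rule ccontr)
  assume "\<not> (\<exists>j<k. infinite ((\<lambda>w. w ! j) ` D))"
  then have f: "finite (\<Union>j<k. (\<lambda>w. w ! j) ` D)" by auto
  have "D \<subseteq> {w. set w \<subseteq> (\<Union>j<k. (\<lambda>w. w ! j) ` D) \<and> length w = k}"
  proof
    fix w assume "w \<in> D"
    then have "length w = k" using assms(1) by auto
    moreover have "set w \<subseteq> (\<Union>j<k. (\<lambda>w. w ! j) ` D)"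
    proof
      fix x assume "x \<in> set w"
      then obtain j where "j < length w" "w ! j = x" by (metis in_set_conv_nth)
      then show "x \<in> (\<Union>j<k. (\<lambda>w. w ! j) ` D)" using \<open>w \<in> D\<close> \<open>length w = k\<close> by blast
    qed
    ultimately show "w \<in> {w. set w \<subseteq> (\<Union>j<k. (\<lambda>w. w ! j) ` D) \<and> length w = k}" by simp
  qed
  then have "finite D" using finite_lists_length_eq[OF f] finite_subset by blast
  then show False using assms(2) by simp
qed

lemma tuple_inf:
  assumes S: "saturated I" and B: "finite B" and \<phi>: "params \<phi> \<subseteq> B" "fv \<phi> \<subseteq> {..<k}"
    and inf: "infinite (defset I k \<phi>)"
  shows "\<exists>w\<in>defset I k \<phi>. \<exists>j<k. w ! j \<notin> acl I B"
proof -
  obtain j where j: "j < k" "infinite ((\<lambda>w. w ! j) ` defset I k \<phi>)"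
    using inf_coord[OF _ inf, of k] unfolding defset_def by blast
  have "{a. \<exists>w\<in>defset I k \<phi>. w ! j = (\<lambda>_. a) 0} = (\<lambda>w. w ! j) ` defset I k \<phi>" by auto
  then obtain a where "\<exists>w\<in>defset I k \<phi>. w ! j = a" "a \<notin> acl I B"
    using sat_nonalg[OF S B proj1_efm[OF \<phi> j(1)]] j(2) by auto
  then show ?thesis using j(1) by blast
qed

lemma dim_ge2:
  "dim_ge I B X 2 \<longleftrightarrow> (\<exists>xs\<in>X. \<exists>a b. a < b \<and> b < length xs \<and> xs ! a \<notin> acl I B \<and> xs ! b \<notin> acl I (insert (xs ! a) B))"
proof
  assume "dim_ge I B X 2"
  then obtain xs "is" where h: "xs \<in> X" "length is = 2" "sorted_wrt (<) is" "\<forall>i\<in>set is. i < length xs"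
    "\<forall>j<2. xs ! (is ! j) \<notin> acl I ((\<lambda>k. xs ! (is ! k)) ` {..<j} \<union> B)"
    unfolding dim_ge_def by blast
  then obtain a b where ab: "is = [a, b]"
    by (metis (no_types, opaque_lifting) One_nat_def Suc_length_conv length_0_conv numeral_2_eq_2)
  have "xs ! a \<notin> acl I B" using h(5)[rule_format, of 0] ab by simp
  moreover have "xs ! b \<notin> acl I (insert (xs ! a) B)"
  proof -
    have "(\<lambda>k. xs ! (is ! k)) ` {..<1} = {xs ! a}" using ab by auto
    then show ?thesis using h(5)[rule_format, of 1] ab by simp
  qed
  ultimately show "\<exists>xs\<in>X. \<exists>a b. a < b \<and> b < length xs \<and> xs ! a \<notin> acl I B \<and> xs ! b \<notin> acl I (insert (xs ! a) B)"
    using h ab by auto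
next
  assume "\<exists>xs\<in>X. \<exists>a b. a < b \<and> b < length xs \<and> xs ! a \<notin> acl I B \<and> xs ! b \<notin> acl I (insert (xs ! a) B)"
  then obtain xs a b where h: "xs \<in> X" "a < b" "b < length xs" "xs ! a \<notin> acl I B" "xs ! b \<notin> acl I (insert (xs ! a) B)"
    by blast
  have "\<forall>j<2. xs ! ([a,b] ! j) \<notin> acl I ((\<lambda>k. xs ! ([a,b] ! k)) ` {..<j} \<union> B)"
  proof (intro allI impI)
    fix j :: nat assume "j < 2"
    then consider "j = 0" | "j = 1" by linarith
    then show "xs ! ([a,b] ! j) \<notin> acl I ((\<lambda>k. xs ! ([a,b] ! k)) ` {..<j} \<union> B)"
    proof cases
      case 2
      have "(\<lambda>k. xs ! ([a,b] ! k)) ` {..<1} = {xs ! a}" by auto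
      then show ?thesis using 2 h(5) by simp
    qed (use h(4) in simp)
  qed
  then show "dim_ge I B X 2" unfolding dim_ge_def using h by (intro bexI[OF _ h(1)] exI[of _ "[a,b]"]) auto
qed

lemma sorted_sub_map:
  assumes U: "finite U" and S: "S \<subseteq> U"
  defines "e \<equiv> sorted_list_of_set U"
  shows "map (\<lambda>p. e ! p) (sorted_list_of_set {p. p < card U \<and> e ! p \<in> S}) = sorted_list_of_set S"
proof -
  let ?S' = "{p. p < card U \<and> e ! p \<in> S}"
  let ?s = "sorted_list_of_set ?S'"
  have fS': "finite ?S'" by simp
  have se: "sorted_wrt (<) e" unfolding e_def by simp
  have le: "length e = card U" unfolding e_def by simp
  have ss: "sorted_wrt (<) ?s" by simp
  have sets: "set ?s = ?S'" using fS' by simp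
  have "sorted_wrt (<) (map (\<lambda>p. e ! p) ?s)"
    unfolding sorted_wrt_iff_nth_less
  proof (intro allI impI)
    fix i j assume ij: "i < j" "j < length (map (\<lambda>p. e ! p) ?s)"
    then have "?s ! i < ?s ! j" using sorted_wrt_nth_less[OF ss] by simp
    moreover have "?s ! j \<in> set ?s" using ij by (intro nth_mem) simp
    then have "?s ! j \<in> ?S'" using sets by simp
    ultimately show "map (\<lambda>p. e ! p) ?s ! i < map (\<lambda>p. e ! p) ?s ! j"
      using ij sorted_wrt_nth_less[OF se, of "?s ! i" "?s ! j"] le by simp
  qed
  moreover have "set (map (\<lambda>p. e ! p) ?s) = S"
  proof -
    have "set (map (\<lambda>p. e ! p) ?s) = (\<lambda>p. e ! p) ` ?S'" using sets by simp
    also have "\<dots> = S"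
    proof
      show "(\<lambda>p. e ! p) ` ?S' \<subseteq> S" by auto
      show "S \<subseteq> (\<lambda>p. e ! p) ` ?S'"
      proof
        fix x assume x: "x \<in> S"
        then have "x \<in> set e" using S U unfolding e_def by auto
        then obtain p where "p < length e" "e ! p = x" by (metis in_set_conv_nth)
        then show "x \<in> (\<lambda>p. e ! p) ` ?S'" using x le by auto
      qed
    qed
    finally show ?thesis .
  qed
  moreover have fS: "finite S" using finite_subset[OF S U] .
  moreover have "sorted_wrt (<) (sorted_list_of_set S)" by simp
  moreover have "set (sorted_list_of_set S) = S" using fS by simp
  ultimately show ?thesis
    using strict_sorted_equal[of "sorted_list_of_set S" "map (\<lambda>p. e ! p) ?s"] by simp
qed

lemma proj_sub:
  assumes U: "finite U" and S: "S \<subseteq> U"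
  shows "proj S xs = proj {p. p < card U \<and> sorted_list_of_set U ! p \<in> S} (proj U xs)"
proof -
  let ?e = "sorted_list_of_set U"
  let ?S' = "{p. p < card U \<and> ?e ! p \<in> S}"
  have "proj ?S' (proj U xs) = map (\<lambda>p. map (\<lambda>j. xs ! j) ?e ! p) (sorted_list_of_set ?S')"
    unfolding proj_def by simp
  also have "\<dots> = map (\<lambda>p. xs ! (?e ! p)) (sorted_list_of_set ?S')"
    by (rule map_cong[OF refl]) simp
  also have "\<dots> = map (\<lambda>j. xs ! j) (map (\<lambda>p. ?e ! p) (sorted_list_of_set ?S'))" by simp
  also have "\<dots> = proj S xs" unfolding proj_def sorted_sub_map[OF U S] ..
  finally show ?thesis by simp
qed

lemma card_sub:
  assumes U: "finite U" and S: "S \<subseteq> U"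
  shows "card {p. p < card U \<and> sorted_list_of_set U ! p \<in> S} = card S"
  using arg_cong[OF sorted_sub_map[OF U S], of length] by simp

lemma length_proj[simp]: "finite S \<Longrightarrow> length (proj S xs) = card S"
  by (simp add: proj_def)

lemma curve_ND:
  assumes "params \<phi> \<subseteq> acl I {}" "\<not> dim_ge I (params \<phi>) X 2"
  shows "\<not> (\<exists>w\<in>X. \<exists>a b. a < b \<and> b < length w \<and> w ! a \<notin> acl I {} \<and> w ! b \<notin> acl I {w ! a})"
proof -
  have n1: "acl I (params \<phi>) = acl I {}" using acl_norm[of "params \<phi>" I "{}"] assms(1) by simp
  have n2: "acl I (insert x (params \<phi>)) = acl I {x}" for x using acl_norm[of "params \<phi>" I "{x}"] assms(1) by simp
  show ?thesis using assms(2) unfolding dim_ge2 n1 n2 .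
qed

lemma curve_intro:
  assumes "params \<phi> \<subseteq> acl I {}" "fv \<phi> \<subseteq> {..<k}" "X = defset I k \<phi>"
    "\<not> (\<exists>w\<in>X. \<exists>a b. a < b \<and> b < length w \<and> w ! a \<notin> acl I {} \<and> w ! b \<notin> acl I {w ! a})"
  shows "curve I (acl I {}) k X"
proof -
  have n1: "acl I (params \<phi>) = acl I {}" using acl_norm[of "params \<phi>" I "{}"] assms(1) by simp
  have n2: "acl I (insert x (params \<phi>)) = acl I {x}" for x using acl_norm[of "params \<phi>" I "{x}"] assms(1) by simp
  have "\<not> dim_ge I (params \<phi>) X 2" unfolding dim_ge2 n1 n2 using assms(4) .
  then show ?thesis unfolding curve_def using assms(1-3) by blast
qed

lemma boolcomb_Inter:
  fixes r :: nat
  shows "(\<forall>i<r. Y i \<in> boolcomb G m) \<Longrightarrow> {xs. length xs = m} \<inter> (\<Inter>i<r. Y i) \<in> boolcomb G m"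
proof (induction r)
  case 0 then show ?case by (simp add: boolcomb.bc_univ)
next
  case (Suc r)
  have "{xs. length xs = m} \<inter> (\<Inter>i<Suc r. Y i) = ({xs. length xs = m} \<inter> (\<Inter>i<r. Y i)) \<inter> Y r"
    by (auto simp: lessThan_Suc)
  then show ?case using Suc by (auto intro: boolcomb.bc_inter)
qed

definition ND :: "('r \<Rightarrow> 'a list \<Rightarrow> bool) \<Rightarrow> 'a list set \<Rightarrow> bool" where
  "ND I X \<longleftrightarrow> \<not> (\<exists>w\<in>X. \<exists>a b. a < b \<and> b < length w \<and> w ! a \<notin> acl I {} \<and> w ! b \<notin> acl I {w ! a})"

context
  fixes I :: "'r \<Rightarrow> 'a list \<Rightarrow> bool" and k :: nat and Cc :: "'a list set" and \<phi> :: "('r, 'a) fm"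
  assumes geom: "geometric I" and satu: "saturated I"
    and \<phi>p: "params \<phi> \<subseteq> acl I {}" and \<phi>v: "fv \<phi> \<subseteq> {..<Suc k}" and Cc: "Cc = defset I (Suc k) \<phi>"
    and nd: "ND I Cc"
begin

definition Fib :: "'a \<Rightarrow> 'a list set" where
  "Fib c = {w. length w = k \<and> w @ [c] \<in> Cc}"

lemma Fib_mem: "x \<in> Fib c \<longleftrightarrow> length x = k \<and> x @ [c] \<in> Cc" by (simp add: Fib_def)

lemma fib_fm: "\<exists>\<psi>. params \<psi> \<subseteq> insert c (params \<phi>) \<and> fv \<psi> \<subseteq> {..<k} \<and> defset I k \<psi> = Fib c"
proof -
  have "Fib c = {w. length w = k \<and> w @ [c] \<in> defset I (Suc k) \<phi>}" unfolding Fib_def using Cc by simp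
  then show ?thesis using fiber_fm[of \<phi> "params \<phi>" k c I] \<phi>v by simp
qed

lemma fib_curve: "c \<in> acl I {} \<Longrightarrow> curve I (acl I {}) k (Fib c)"
proof -
  assume c: "c \<in> acl I {}"
  obtain \<psi> where \<psi>: "params \<psi> \<subseteq> insert c (params \<phi>)" "fv \<psi> \<subseteq> {..<k}" "defset I k \<psi> = Fib c"
    using fib_fm by blast
  show ?thesis
  proof (rule curve_intro)
    show "params \<psi> \<subseteq> acl I {}" using \<psi>(1) \<phi>p c by auto
    show "fv \<psi> \<subseteq> {..<k}" by (rule \<psi>(2))
    show "Fib c = defset I k \<psi>" using \<psi>(3) by simp
    show "\<not> (\<exists>w\<in>Fib c. \<exists>a b. a < b \<and> b < length w \<and> w ! a \<notin> acl I {} \<and> w ! b \<notin> acl I {w ! a})"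
    proof
      assume "\<exists>w\<in>Fib c. \<exists>a b. a < b \<and> b < length w \<and> w ! a \<notin> acl I {} \<and> w ! b \<notin> acl I {w ! a}"
      then obtain w a b where h: "w \<in> Fib c" "a < b" "b < length w" "w ! a \<notin> acl I {}" "w ! b \<notin> acl I {w ! a}"
        by blast
      then have "w @ [c] \<in> Cc" "length w = k" unfolding Fib_def by auto
      moreover have "(w @ [c]) ! a = w ! a" "(w @ [c]) ! b = w ! b" using h by (auto simp: nth_append)
      ultimately show False using nd h unfolding ND_def
        by (metis length_append_singleton less_SucI)
    qed
  qed
qed

lemma fin_params: "finite (params \<phi>)" by simp

lemma fib_fin_acl: "finite (Fib c) \<Longrightarrow> w \<in> Fib c \<Longrightarrow> j < k \<Longrightarrow> w ! j \<in> acl I {c}"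
proof -
  assume f: "finite (Fib c)" and w: "w \<in> Fib c" and j: "j < k"
  obtain \<psi> where \<psi>: "params \<psi> \<subseteq> insert c (params \<phi>)" "fv \<psi> \<subseteq> {..<k}" "defset I k \<psi> = Fib c"
    using fib_fm by blast
  have "w ! j \<in> acl I (insert c (params \<phi>))"
    using tuple_fin_acl[OF \<psi>(1,2), where w=w and j=j] f w j \<psi>(3) by simp
  moreover have "acl I (insert c (params \<phi>)) = acl I {c}"
    using acl_norm[of "params \<phi>" I "{c}"] \<phi>p by simp
  ultimately show ?thesis by simp
qed

lemma Qsub: "infinite (Fib c) \<Longrightarrow> c \<in> acl I {}"
proof (rule ccontr)
  assume inf: "infinite (Fib c)" and c: "c \<notin> acl I {}"
  obtain \<psi> where \<psi>: "params \<psi> \<subseteq> insert c (params \<phi>)" "fv \<psi> \<subseteq> {..<k}" "defset I k \<psi> = Fib c"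
    using fib_fm by blast
  obtain w j where wj: "w \<in> Fib c" "j < k" "w ! j \<notin> acl I (insert c (params \<phi>))"
    using tuple_inf[OF satu _ \<psi>(1,2)] inf \<psi>(3) by auto
  have "acl I (insert c (params \<phi>)) = acl I {c}"
    using acl_norm[of "params \<phi>" I "{c}"] \<phi>p by simp
  then have wj3: "w ! j \<notin> acl I {c}" using wj(3) by simp
  have wj0: "w ! j \<notin> acl I {}" using wj3 acl_mono[of "{}" "{c}" I] by auto
  have "c \<notin> acl I {w ! j}"
  proof
    assume "c \<in> acl I {w ! j}"
    then have "c \<in> acl I (insert (w ! j) {}) - acl I {}" using c by simp
    then have "w ! j \<in> acl I (insert c {})" using geom unfolding geometric_def exchange_def by blast
    then show False using wj3 by simp
  qed
  moreover have "w @ [c] \<in> Cc" "length w = k" using wj(1) unfolding Fib_def by auto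
  moreover have "(w @ [c]) ! j = w ! j" "(w @ [c]) ! k = c" using wj \<open>length w = k\<close> by (auto simp: nth_append)
  ultimately show False using nd wj(2) wj0 unfolding ND_def
    by (metis length_append_singleton lessI)
qed

lemma Zfib:
  assumes j: "j < k"
  shows "{a. \<exists>w\<in>Cc. w ! j = a \<and> w ! k = c} = (\<lambda>w. w ! j) ` Fib c"
proof
  show "{a. \<exists>w\<in>Cc. w ! j = a \<and> w ! k = c} \<subseteq> (\<lambda>w. w ! j) ` Fib c"
  proof
    fix a assume "a \<in> {a. \<exists>w\<in>Cc. w ! j = a \<and> w ! k = c}"
    then obtain w where w: "w \<in> Cc" "w ! j = a" "w ! k = c" by blast
    have len: "length w = Suc k" using w(1) Cc unfolding defset_def by simp
    then have "w = butlast w @ [last w]" by (metis append_butlast_last_id length_greater_0_conv zero_less_Suc)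
    moreover have "last w = c"
    proof -
      have "w \<noteq> []" using len by auto
      then have "last w = w ! (length w - 1)" by (rule last_conv_nth)
      then show ?thesis using w(3) len by simp
    qed
    ultimately have "butlast w @ [c] \<in> Cc" using w(1) by simp
    then have "butlast w \<in> Fib c" unfolding Fib_def using len by simp
    moreover have "butlast w ! j = a" using w(2) len j by (simp add: nth_butlast)
    ultimately show "a \<in> (\<lambda>w. w ! j) ` Fib c" by blast
  qed
  show "(\<lambda>w. w ! j) ` Fib c \<subseteq> {a. \<exists>w\<in>Cc. w ! j = a \<and> w ! k = c}"
  proof
    fix a assume "a \<in> (\<lambda>w. w ! j) ` Fib c"
    then obtain w where w: "w \<in> Fib c" "a = w ! j" by blast
    then have "w @ [c] \<in> Cc" "length w = k" unfolding Fib_def by auto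
    moreover have "(w @ [c]) ! j = a" "(w @ [c]) ! k = c" using w j \<open>length w = k\<close> by (auto simp: nth_append)
    ultimately show "a \<in> {a. \<exists>w\<in>Cc. w ! j = a \<and> w ! k = c}" by blast
  qed
qed


lemma Qfin: "finite {c. infinite (Fib c)}"
proof (rule ccontr)
  assume inf: "infinite {c. infinite (Fib c)}"
  have sub: "{c. infinite (Fib c)} \<subseteq> (\<Union>j<k. {c. infinite ((\<lambda>w. w ! j) ` Fib c)})"
  proof
    fix c assume "c \<in> {c. infinite (Fib c)}"
    then have "infinite (Fib c)" by simp
    moreover have "Fib c \<subseteq> {w. length w = k}" unfolding Fib_def by auto
    ultimately obtain j where "j < k" "infinite ((\<lambda>w. w ! j) ` Fib c)" using inf_coord by blast
    then show "c \<in> (\<Union>j<k. {c. infinite ((\<lambda>w. w ! j) ` Fib c)})" by blast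
  qed
  have "\<exists>j<k. infinite {c. infinite ((\<lambda>w. w ! j) ` Fib c)}"
  proof (rule ccontr)
    assume "\<not> (\<exists>j<k. infinite {c. infinite ((\<lambda>w. w ! j) ` Fib c)})"
    then have "finite (\<Union>j<k. {c. infinite ((\<lambda>w. w ! j) ` Fib c)})" by auto
    then show False using inf sub finite_subset by blast
  qed
  then obtain j where j: "j < k" "infinite {c. infinite ((\<lambda>w. w ! j) ` Fib c)}" by blast
  let ?Qj = "{c. infinite ((\<lambda>w. w ! j) ` Fib c)}"
  define g where "g = (\<lambda>t::nat. if t = j then 1 else (0::nat))"
  have jk: "j \<noteq> k" using j by simp
  have gJ: "g ` {j, k} = {0, 1}" using jk by (auto simp: g_def)
  have Z0: "efm I (params \<phi>) (g ` {j, k}) (\<lambda>v. \<exists>w\<in>defset I (Suc k) \<phi>. \<forall>t\<in>{j, k}. w ! t = v (g t))"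
    by (rule efm_proj[OF subset_refl \<phi>v]) (use j in \<open>auto simp: g_def\<close>)
  define Z where "Z = (\<lambda>v::nat \<Rightarrow> 'a. \<exists>w\<in>Cc. w ! j = v 1 \<and> w ! k = v 0)"
  have Ze: "efm I (params \<phi>) {0, 1} Z"
    using Z0 unfolding gJ
    by (rule efm_cong) (use jk in \<open>auto simp: Z_def g_def Cc\<close>)
  define \<theta> where "\<theta> = (\<lambda>N (v::nat \<Rightarrow> 'a). atleast N {a. Z (v(1:=a))})"
  have \<theta>e: "efm I (params \<phi>) {0} (\<theta> N)" for N
  proof -
    have "efm I (params \<phi>) ({0, 1} - {1}) (\<lambda>v. atleast N {a. Z (v(1:=a))})"
      by (rule efm_count[OF Ze]) simp
    then show ?thesis unfolding \<theta>_def by (rule efm_mono) auto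
  qed
  have \<theta>c: "\<theta> N (\<lambda>_. c) = atleast N ((\<lambda>w. w ! j) ` Fib c)" for N c
  proof -
    have "{a. Z ((\<lambda>_. c)(1:=a))} = {a. \<exists>w\<in>Cc. w ! j = a \<and> w ! k = c}" by (auto simp: Z_def)
    then show ?thesis unfolding \<theta>_def using Zfib[OF j(1)] by simp
  qed
  define tf where "tf = (\<lambda>N. SOME \<psi>. params \<psi> \<subseteq> params \<phi> \<and> fv \<psi> \<subseteq> {0} \<and> (\<forall>v. sat I v \<psi> = \<theta> N v))"
  have tfp: "params (tf N) \<subseteq> params \<phi> \<and> fv (tf N) \<subseteq> {0} \<and> (\<forall>v. sat I v (tf N) = \<theta> N v)" for N
    unfolding tf_def by (rule someI_ex) (use \<theta>e[of N] in \<open>unfold efm_def\<close>)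
  have U: "infinite (UNIV :: 'a set)" by (rule infinite_super[OF subset_UNIV j(2)])
  have "\<exists>b::'a. b \<notin> acl I (params \<phi>) \<and> (\<forall>\<psi>\<in>range tf. sat I (\<lambda>_. b) \<psi>)"
  proof (rule sat_realize[OF satu fin_params U])
    show "\<forall>\<psi>\<in>range tf. fv \<psi> \<subseteq> {0} \<and> params \<psi> \<subseteq> params \<phi>" using tfp by auto
    fix \<Sigma>0 F assume h: "\<Sigma>0 \<subseteq> range tf" "finite \<Sigma>0" "finite (F::'a set)"
    have "infinite (?Qj - F)" using j(2) h(3) by simp
    then obtain c where c: "c \<in> ?Qj" "c \<notin> F" using infinite_imp_nonempty by blast
    have "\<forall>\<psi>\<in>\<Sigma>0. sat I (\<lambda>_. c) \<psi>"
    proof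
      fix \<psi> assume "\<psi> \<in> \<Sigma>0"
      then obtain N where "\<psi> = tf N" using h(1) by blast
      then show "sat I (\<lambda>_. c) \<psi>" using tfp \<theta>c c(1) by (simp add: atleast_def)
    qed
    then show "\<exists>b. b \<notin> F \<and> (\<forall>\<psi>\<in>\<Sigma>0. sat I (\<lambda>_. b) \<psi>)" using c(2) by blast
  qed
  then obtain b where b: "b \<notin> acl I (params \<phi>)" "\<forall>N. sat I (\<lambda>_. b) (tf N)" by blast
  have "\<forall>N. atleast N ((\<lambda>w. w ! j) ` Fib b)" using b(2) tfp \<theta>c by simp
  then have "infinite ((\<lambda>w. w ! j) ` Fib b)" using atleast_all by blast
  then have "infinite (Fib b)" by blast
  then have "b \<in> acl I {}" by (rule Qsub)
  then show False using b(1) acl_mono[of "{}" "params \<phi>" I] by blast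
qed

end

lemma ND_use: "ND I X \<Longrightarrow> T \<in> X \<Longrightarrow> a < b \<Longrightarrow> b < length T \<Longrightarrow> T ! a \<notin> acl I {} \<Longrightarrow> T ! b \<in> acl I {T ! a}"
  unfolding ND_def by blast

lemma last_nth_Suc: "length zs = Suc m \<Longrightarrow> last zs = zs ! m"
  by (cases zs rule: rev_cases) (auto simp: nth_append)

theorem lemma3p6:
  fixes I :: "'r \<Rightarrow> 'a list \<Rightarrow> bool"
    and n r :: nat
    and S :: "nat \<Rightarrow> nat set"
    and C :: "nat \<Rightarrow> 'a list set"
  assumes geom: "geometric I"
    and sat: "saturated I"
    and sub: "\<forall>i<r. S i \<subseteq> {..<n}"
    and crv: "\<forall>i<r. curve I (acl I {}) (card (S i) + 1) (C i)"
  shows "\<exists>E (L::nat) (q :: nat \<Rightarrow> 'a) (\<Phi> :: nat \<Rightarrow> 'a list set).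
           curve I (acl I {}) (card (\<Union>i<r. S i) + 1) E
         \<and> (\<forall>l<L. q l \<in> acl I {})
         \<and> (\<forall>l<L. \<Phi> l \<in> boolcomb (cylinders I (acl I {}) (card (\<Union>i<r. S i)))
                                   (card (\<Union>i<r. S i)))
         \<and> (\<forall>xs y. length xs = n \<longrightarrow>
              ((\<forall>i<r. proj (S i) xs @ [y] \<in> C i) \<longleftrightarrow>
               (proj (\<Union>i<r. S i) xs @ [y] \<in> E
                \<or> (\<exists>l<L. y = q l \<and> proj (\<Union>i<r. S i) xs \<in> \<Phi> l))))
         \<and> (\<forall>zs\<in>E. \<forall>l<L. last zs \<noteq> q l)"
proof -
  define k where "k = (\<lambda>i. card (S i))"
  have "\<forall>i\<in>{..<r}. \<exists>\<phi>. params \<phi> \<subseteq> acl I {} \<and> fv \<phi> \<subseteq> {..<Suc (k i)} \<and> C i = defset I (Suc (k i)) \<phi>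
      \<and> \<not> dim_ge I (params \<phi>) (C i) 2"
    using crv unfolding curve_def k_def by simp
  then obtain \<phi> where \<phi>: "\<forall>i\<in>{..<r}. params (\<phi> i) \<subseteq> acl I {} \<and> fv (\<phi> i) \<subseteq> {..<Suc (k i)}
      \<and> C i = defset I (Suc (k i)) (\<phi> i) \<and> \<not> dim_ge I (params (\<phi> i)) (C i) 2"
    by (metis bchoice)
  have \<phi>p: "params (\<phi> i) \<subseteq> acl I {}" and \<phi>v: "fv (\<phi> i) \<subseteq> {..<Suc (k i)}"
    and Ci: "C i = defset I (Suc (k i)) (\<phi> i)" if "i < r" for i
    using \<phi> that by auto
  have nd: "ND I (C i)" if "i < r" for i
  proof -
    have h: "params (\<phi> i) \<subseteq> acl I {}" "\<not> dim_ge I (params (\<phi> i)) (C i) 2" using \<phi> that by blast+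
    show ?thesis unfolding ND_def by (rule curve_ND[OF h])
  qed
  note fibc = fib_curve[OF geom sat \<phi>p \<phi>v Ci nd]
  note fibfa = fib_fin_acl[OF geom sat \<phi>p \<phi>v Ci nd]
  note qsub = Qsub[OF geom sat \<phi>p \<phi>v Ci nd]
  note qfin = Qfin[OF geom sat \<phi>p \<phi>v Ci nd]
  note fibm = Fib_mem[OF geom sat \<phi>p \<phi>v Ci nd]
  define Q where "Q = (\<Union>i<r. {c. infinite (Fib (k i) (C i) c)})"
  have finQ: "finite Q" unfolding Q_def using qfin by auto
  have Qacl: "Q \<subseteq> acl I {}" unfolding Q_def using qsub by auto
  define L where "L = card Q"
  obtain q where q: "bij_betw q {0..<L} Q" using ex_bij_betw_nat_finite[OF finQ] unfolding L_def by blast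
  have qQ: "y \<in> Q \<longleftrightarrow> (\<exists>l<L. y = q l)" for y
    using q unfolding bij_betw_def by auto
  define U where "U = (\<Union>i<r. S i)"
  have finU: "finite U" unfolding U_def using sub finite_subset by (auto intro: finite_subset[of _ "{..<n}"])
  have SU: "S i \<subseteq> U" if "i < r" for i unfolding U_def using that by auto
  define m where "m = card U"
  define e where "e = sorted_list_of_set U"
  define S' where "S' = (\<lambda>i. {p. p < card U \<and> e ! p \<in> S i})"
  define sl where "sl = (\<lambda>i. sorted_list_of_set (S' i))"
  have cS': "card (S' i) = k i" if "i < r" for i
    unfolding S'_def e_def k_def using card_sub[OF finU SU[OF that]] .
  have S'm: "S' i \<subseteq> {..<m}" for i unfolding S'_def m_def by auto
  have finS': "finite (S' i)" for i using S'm finite_subset by blast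
  have lsl: "length (sl i) = k i" if "i < r" for i unfolding sl_def using cS'[OF that] by simp
  have setsl: "set (sl i) = S' i" for i unfolding sl_def using finS' by simp
  have projS: "proj (S i) xs = proj (S' i) (proj U xs)" if "i < r" for i xs
    unfolding S'_def e_def using proj_sub[OF finU SU[OF that]] .
  have lenP: "length (proj (S' i) x) = k i" if "i < r" for i x using cS'[OF that] finS' by simp
  have coord: "\<exists>i<r. \<exists>t<k i. proj (S' i) x ! t = x ! p" if "p < m" for p x
  proof -
    have "e ! p \<in> set e" using that unfolding e_def m_def by simp
    then have "e ! p \<in> U" unfolding e_def using finU by simp
    then obtain i where i: "i < r" "e ! p \<in> S i" unfolding U_def by blast
    then have "p \<in> S' i" unfolding S'_def using that m_def by simp
    then obtain t where t: "t < length (sl i)" "sl i ! t = p" using setsl by (metis in_set_conv_nth)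
    have "proj (S' i) x ! t = x ! (sl i ! t)" unfolding proj_def sl_def using t(1) sl_def by simp
    then show ?thesis using i(1) t lsl[OF i(1)] by auto
  qed
  define E where "E = {zs. length zs = Suc m \<and> (\<forall>i<r. proj (S' i) (butlast zs) @ [last zs] \<in> C i) \<and> last zs \<notin> Q}"
  define \<Phi> where "\<Phi> = (\<lambda>l. {x'. length x' = m \<and> (\<forall>i<r. proj (S' i) x' @ [q l] \<in> C i)})"
  have projnth: "proj (S' i) x ! t = x ! (sl i ! t)" if "i < r" "t < k i" for i x t
    unfolding proj_def sl_def using that lsl[OF that(1)] sl_def by simp
  have slm: "sl i ! t < m" if "i < r" "t < k i" for i t
  proof -
    have "sl i ! t \<in> set (sl i)" using that lsl[OF that(1)] by simp
    then show ?thesis using setsl S'm by auto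
  qed
  define \<sigma> where "\<sigma> = (\<lambda>i t. if t < k i then Var (sl i ! t) else (Var m :: 'a tm))"
  have semi: "sat I (\<lambda>t. tval (\<lambda>j. zs ! j) (\<sigma> i t)) (\<phi> i) \<longleftrightarrow> proj (S' i) (butlast zs) @ [last zs] \<in> C i"
    if i: "i < r" and zs: "length zs = Suc m" for i zs
  proof -
    let ?T = "proj (S' i) (butlast zs) @ [last zs]"
    have lT: "length ?T = Suc (k i)" using lenP[OF i] by simp
    have lz: "last zs = zs ! m" using zs by (rule last_nth_Suc)
    have "sat I (\<lambda>t. tval (\<lambda>j. zs ! j) (\<sigma> i t)) (\<phi> i) = sat I (\<lambda>j. ?T ! j) (\<phi> i)"
    proof (rule sat_agree, intro ballI)
      fix t assume "t \<in> fv (\<phi> i)"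
      then have t: "t < Suc (k i)" using \<phi>v[OF i] by auto
      show "tval (\<lambda>j. zs ! j) (\<sigma> i t) = ?T ! t"
      proof (cases "t < k i")
        case True
        have "t < length (proj (S' i) (butlast zs))" using True lenP[OF i, of "butlast zs"] by simp
        then have "?T ! t = proj (S' i) (butlast zs) ! t" by (simp add: nth_append)
        also have "\<dots> = butlast zs ! (sl i ! t)" using projnth[OF i True] .
        also have "\<dots> = zs ! (sl i ! t)" using slm[OF i True] zs by (simp add: nth_butlast)
        finally show ?thesis using True by (simp add: \<sigma>_def)
      next
        case False
        then have "t = k i" using t by simp
        moreover have "length (proj (S' i) (butlast zs)) = k i" using lenP[OF i] .
        ultimately show ?thesis using lz by (simp add: \<sigma>_def nth_append)
      qed
    qed
    then show ?thesis using Ci[OF i] lT unfolding defset_def by simp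
  qed
  have efmi: "efm I (acl I {}) {..<Suc m} (\<lambda>v. sat I (\<lambda>t. tval v (\<sigma> i t)) (\<phi> i))" if i: "i < r" for i
  proof -
    from efm_subst[OF efm_of_fm[OF \<phi>p[OF i] \<phi>v[OF i]], where \<sigma>="\<sigma> i"]
    show ?thesis
    proof (rule efm_mono)
      show "acl I {} \<union> (\<Union>t\<in>{..<Suc (k i)}. tpars (\<sigma> i t)) \<subseteq> acl I {}" by (auto simp: \<sigma>_def split: if_splits)
      show "(\<Union>t\<in>{..<Suc (k i)}. tvars (\<sigma> i t)) \<subseteq> {..<Suc m}"
        using slm[OF i] by (auto simp: \<sigma>_def less_Suc_eq split: if_splits)
    qed
  qed
  have efmQ: "efm I (acl I {}) {..<Suc m} (\<lambda>v. \<forall>c\<in>Q. \<not> (tval v (Var m) = tval v (Par c)))"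
  proof (rule efm_ball[OF finQ], rule ballI)
    fix c assume c: "c \<in> Q"
    have "efm I (tpars (Var m) \<union> tpars (Par c)) (tvars (Var m) \<union> tvars (Par c)) (\<lambda>v. tval v (Var m) = tval v (Par c))"
      using efm_eq[of I "Var m" "Par c"] by simp
    then have "efm I (acl I {}) {..<Suc m} (\<lambda>v. tval v (Var m) = tval v (Par c))"
      by (rule efm_mono) (use c Qacl in auto)
    then show "efm I (acl I {}) {..<Suc m} (\<lambda>v. \<not> (tval v (Var m) = tval v (Par c)))" by (rule efm_not)
  qed
  have efmE: "efm I (acl I {}) {..<Suc m} (\<lambda>v. (\<forall>i\<in>{..<r}. sat I (\<lambda>t. tval v (\<sigma> i t)) (\<phi> i))
      \<and> (\<forall>c\<in>Q. \<not> (tval v (Var m) = tval v (Par c))))"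
    by (rule efm_and[OF efm_ball[OF finite_lessThan] efmQ]) (use efmi in blast)
  obtain \<phi>E where \<phi>E: "params \<phi>E \<subseteq> acl I {}" "fv \<phi>E \<subseteq> {..<Suc m}"
    "defset I (Suc m) \<phi>E = {zs. length zs = Suc m \<and> ((\<forall>i\<in>{..<r}. sat I (\<lambda>t. tval (\<lambda>j. zs ! j) (\<sigma> i t)) (\<phi> i))
      \<and> (\<forall>c\<in>Q. \<not> (tval (\<lambda>j. zs ! j) (Var m) = tval (\<lambda>j. zs ! j) (Par c))))}"
    using efm_defset[OF efmE] by blast
  have dE: "defset I (Suc m) \<phi>E = E"
  proof -
    have "((\<forall>i\<in>{..<r}. sat I (\<lambda>t. tval (\<lambda>j. zs ! j) (\<sigma> i t)) (\<phi> i))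
      \<and> (\<forall>c\<in>Q. \<not> (tval (\<lambda>j. zs ! j) (Var m) = tval (\<lambda>j. zs ! j) (Par c))))
      \<longleftrightarrow> (\<forall>i<r. proj (S' i) (butlast zs) @ [last zs] \<in> C i) \<and> last zs \<notin> Q"
      if zs: "length zs = Suc m" for zs
    proof -
      have lz: "last zs = zs ! m" using zs by (rule last_nth_Suc)
      show ?thesis using semi[OF _ zs] lz by auto
    qed
    then show ?thesis unfolding \<phi>E(3) E_def by auto
  qed
  have ndE: "\<not> (\<exists>zs\<in>E. \<exists>a b. a < b \<and> b < length zs \<and> zs ! a \<notin> acl I {} \<and> zs ! b \<notin> acl I {zs ! a})"
  proof
    assume "\<exists>zs\<in>E. \<exists>a b. a < b \<and> b < length zs \<and> zs ! a \<notin> acl I {} \<and> zs ! b \<notin> acl I {zs ! a}"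
    then obtain zs a b where h: "zs \<in> E" "a < b" "b < length zs" "zs ! a \<notin> acl I {}" "zs ! b \<notin> acl I {zs ! a}"
      by blast
    have zs: "length zs = Suc m" and CT: "\<forall>i<r. proj (S' i) (butlast zs) @ [last zs] \<in> C i"
      and yQ: "last zs \<notin> Q" using h(1) unfolding E_def by auto
    have lz: "last zs = zs ! m" using zs by (rule last_nth_Suc)
    have bt: "butlast zs ! p = zs ! p" if "p < m" for p using that zs by (simp add: nth_butlast)
    have am: "a < m" using h(2,3) zs by simp
    obtain ia ta where ia: "ia < r" "ta < k ia" "proj (S' ia) (butlast zs) ! ta = butlast zs ! a"
      using coord[OF am] by blast
    let ?Ta = "proj (S' ia) (butlast zs) @ [last zs]"
    have lTa: "length (proj (S' ia) (butlast zs)) = k ia" using lenP[OF ia(1)] .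
    have Ta1: "?Ta ! ta = zs ! a" using ia lTa bt[OF am] by (simp add: nth_append)
    have Ta2: "?Ta ! k ia = last zs" using lTa by (simp add: nth_append)
    have "?Ta ! k ia \<in> acl I {?Ta ! ta}"
      by (rule ND_use[OF nd[OF ia(1)] CT[rule_format, OF ia(1)] ia(2)]) (use lTa Ta1 h(4) in auto)
    then have hy: "last zs \<in> acl I {zs ! a}" using Ta1 Ta2 by simp
    show False
    proof (cases "b = m")
      case True
      then show False using hy lz h(5) by simp
    next
      case False
      then have bm: "b < m" using h(3) zs by simp
      obtain ib tb where ib: "ib < r" "tb < k ib" "proj (S' ib) (butlast zs) ! tb = butlast zs ! b"
        using coord[OF bm] by blast
      have wF: "proj (S' ib) (butlast zs) \<in> Fib (k ib) (C ib) (last zs)"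
        using fibm[OF ib(1) ib(1) ib(1) ib(1)] lenP[OF ib(1), of "butlast zs"] CT ib(1) by simp
      have "finite (Fib (k ib) (C ib) (last zs))" using yQ ib(1) unfolding Q_def by blast
      then have "proj (S' ib) (butlast zs) ! tb \<in> acl I {last zs}"
        by (rule fibfa[OF ib(1) ib(1) ib(1) ib(1) _ wF ib(2)])
      then have "zs ! b \<in> acl I {last zs}" using ib(3) bt[OF bm] by simp
      then have "zs ! b \<in> acl I (insert (last zs) {zs ! a})" using acl_mono[of "{last zs}" "insert (last zs) {zs ! a}" I] by auto
      then have "zs ! b \<in> acl I {zs ! a}" using hy by (rule acl_trans1)
      then show False using h(5) by simp
    qed
  qed
  have curveE: "curve I (acl I {}) (Suc m) E"
    by (rule curve_intro[OF \<phi>E(1,2) dE[symmetric] ndE])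
  have qacl: "\<forall>l<L. q l \<in> acl I {}" using qQ Qacl by auto
  have bc: "\<forall>l<L. \<Phi> l \<in> boolcomb (cylinders I (acl I {}) m) m"
  proof (intro allI impI)
    fix l assume l: "l < L"
    define Y where "Y = (\<lambda>i. {x'. length x' = m \<and> proj (S' i) x' \<in> Fib (k i) (C i) (q l)})"
    have "\<forall>i<r. Y i \<in> boolcomb (cylinders I (acl I {}) m) m"
    proof (intro allI impI)
      fix i assume i: "i < r"
      have cv: "curve I (acl I {}) (k i) (Fib (k i) (C i) (q l))"
        by (rule fibc) (use i l qacl in auto)
      have "Y i \<in> cylinders I (acl I {}) m"
        unfolding cylinders_def Y_def using S'm[of i] cv cS'[OF i]
        by (intro CollectI exI[of _ "S' i"] exI[of _ "Fib (k i) (C i) (q l)"] conjI) auto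
      then show "Y i \<in> boolcomb (cylinders I (acl I {}) m) m" by (rule boolcomb.bc_basic)
    qed
    then have "{xs. length xs = m} \<inter> (\<Inter>i<r. Y i) \<in> boolcomb (cylinders I (acl I {}) m) m"
      by (rule boolcomb_Inter)
    moreover have "{xs. length xs = m} \<inter> (\<Inter>i<r. Y i) = \<Phi> l"
    proof -
      have fm: "proj (S' i) x \<in> Fib (k i) (C i) (q l) \<longleftrightarrow> proj (S' i) x @ [q l] \<in> C i" if "i < r" for i x
        using lenP[OF that, of x] fibm[OF that that that that] by simp
      show ?thesis unfolding Y_def \<Phi>_def using fm by auto
    qed
    ultimately show "\<Phi> l \<in> boolcomb (cylinders I (acl I {}) m) m" by simp
  qed
  have eqv: "\<forall>xs y. length xs = n \<longrightarrow>
              ((\<forall>i<r. proj (S i) xs @ [y] \<in> C i) \<longleftrightarrow>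
               (proj U xs @ [y] \<in> E \<or> (\<exists>l<L. y = q l \<and> proj U xs \<in> \<Phi> l)))"
  proof (intro allI impI)
    fix xs y assume "length (xs::'a list) = n"
    define x' where "x' = proj U xs"
    have lx: "length x' = m" unfolding x'_def m_def using finU by simp
    have A: "(\<forall>i<r. proj (S i) xs @ [y] \<in> C i) \<longleftrightarrow> (\<forall>i<r. proj (S' i) x' @ [y] \<in> C i)"
      unfolding x'_def using projS by (metis (no_types, lifting))
    have E': "x' @ [y] \<in> E \<longleftrightarrow> (\<forall>i<r. proj (S' i) x' @ [y] \<in> C i) \<and> y \<notin> Q"
      unfolding E_def using lx by simp
    have P': "x' \<in> \<Phi> l \<longleftrightarrow> (\<forall>i<r. proj (S' i) x' @ [q l] \<in> C i)" for l
      unfolding \<Phi>_def using lx by simp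
    show "(\<forall>i<r. proj (S i) xs @ [y] \<in> C i) \<longleftrightarrow>
               (proj U xs @ [y] \<in> E \<or> (\<exists>l<L. y = q l \<and> proj U xs \<in> \<Phi> l))"
      unfolding x'_def[symmetric] A E' P' using qQ[of y] by auto
  qed
  have lastE: "\<forall>zs\<in>E. \<forall>l<L. last zs \<noteq> q l" unfolding E_def using qQ by auto
  show ?thesis unfolding U_def[symmetric] m_def[symmetric]
    using curveE qacl bc eqv lastE by (intro exI[of _ E] exI[of _ L] exI[of _ q] exI[of _ \<Phi>]) simp
qed

end
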